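(* Let $\mathcal T$ be a locally finite tessellation of ${\mathbb X}$ and $T$ a tile of $\mathcal T$. Then the boundary $\partial T$ is the union of the sides of $\mathcal T$ contained in $T$.
   Context: ${\mathbb X}$ is $\mathbb R^n$, the unit sphere $\mathbb S^n$, or hyperbolic $n$-space. A subspace is a complete totally geodesic submanifold; a hyperplane is a subspace of codimension 1; closed half-spaces are the closures of the two components of the complement of a hyperplane. A polyhedron is a nonempty intersection of a family of closed half-spaces whose boundary hyperplanes form a locally finite family; its codimension is that of the smallest subspace containing it and its relative interior $C^r$ is its interior in that subspace; it is thick if it has nonempty interior in ${\mathbb X}$. A tessellation is a set of thick polyhedra (tiles) covering ${\mathbb X}$ with pairwise disjoint interiors; locally finite means every compact set meets only finitely many tiles. A cell is a nonempty intersection $C$ of tiles such that for every tile $T'$ either $C\subseteq T'$ or $C^r\cap T'=\emptyset$; a side is a cell of codimension 1. *)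

theory Defs
  imports "HOL-Analysis.Analysis"
begin

text \<open>
  The three model geometries, all realised inside a Euclidean space of type 'a.
  Spherical n-space: the unit sphere of 'a, with n = DIM('a) - 1.
  Hyperbolic n-space: the hyperboloid model (upper sheet) in 'a with respect to
  the Lorentzian form that is negative in the direction of the unit vector e,
  with n = DIM('a) - 1.
\<close>

datatype geom = Euclidean | Spherical | Hyperbolic

definition lorentz :: "'a::euclidean_space \<Rightarrow> 'a \<Rightarrow> 'a \<Rightarrow> real" where
  "lorentz e x y = x \<bullet> y - 2 * (x \<bullet> e) * (y \<bullet> e)"

fun gspace :: "geom \<Rightarrow> 'a::euclidean_space \<Rightarrow> 'a set" where
  "gspace Euclidean e = UNIV"
| "gspace Spherical e = sphere 0 1"
| "gspace Hyperbolic e = {x. lorentz e x x = -1 \<and> x \<bullet> e > 0}"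

fun gdim :: "geom \<Rightarrow> 'a::euclidean_space itself \<Rightarrow> nat" where
  "gdim Euclidean _ = DIM('a)"
| "gdim Spherical _ = DIM('a) - 1"
| "gdim Hyperbolic _ = DIM('a) - 1"

text \<open>subspaces = complete totally geodesic submanifolds (nonempty)\<close>
definition is_gsubspace :: "geom \<Rightarrow> 'a::euclidean_space \<Rightarrow> 'a set \<Rightarrow> bool" where
  "is_gsubspace g e S \<longleftrightarrow> S \<noteq> {} \<and>
     (if g = Euclidean then affine S
      else (\<exists>L. subspace L \<and> S = gspace g e \<inter> L))"

definition gsdim :: "geom \<Rightarrow> 'a::euclidean_space set \<Rightarrow> nat" where
  "gsdim g S = (if g = Euclidean then nat (aff_dim S) else dim (span S) - 1)"

definition ghull :: "geom \<Rightarrow> 'a::euclidean_space \<Rightarrow> 'a set \<Rightarrow> 'a set" where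
  "ghull g e C = (if g = Euclidean then affine hull C else gspace g e \<inter> span C)"

definition is_ghyperplane :: "geom \<Rightarrow> 'a::euclidean_space \<Rightarrow> 'a set \<Rightarrow> bool" where
  "is_ghyperplane g e H \<longleftrightarrow> is_gsubspace g e H \<and> gsdim g H + 1 = gdim g TYPE('a)"

definition is_halfspace_of :: "geom \<Rightarrow> 'a::euclidean_space \<Rightarrow> 'a set \<Rightarrow> 'a set \<Rightarrow> bool" where
  "is_halfspace_of g e H K \<longleftrightarrow> is_ghyperplane g e H \<and>
     (\<exists>U \<in> components (gspace g e - H). K = top_of_set (gspace g e) closure_of U)"

definition glocally_finite :: "geom \<Rightarrow> 'a::euclidean_space \<Rightarrow> 'a set set \<Rightarrow> bool" where
  "glocally_finite g e \<F> \<longleftrightarrow>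
     (\<forall>C. compact C \<and> C \<subseteq> gspace g e \<longrightarrow> finite {A \<in> \<F>. A \<inter> C \<noteq> {}})"

definition is_polyhedron :: "geom \<Rightarrow> 'a::euclidean_space \<Rightarrow> 'a set \<Rightarrow> bool" where
  "is_polyhedron g e P \<longleftrightarrow> P \<noteq> {} \<and>
     (\<exists>F :: ('a set \<times> 'a set) set.
        (\<forall>(H, K) \<in> F. is_halfspace_of g e H K) \<and>
        glocally_finite g e (fst ` F) \<and>
        P = gspace g e \<inter> \<Inter> (snd ` F))"

definition grelint :: "geom \<Rightarrow> 'a::euclidean_space \<Rightarrow> 'a set \<Rightarrow> 'a set" where
  "grelint g e C = top_of_set (ghull g e C) interior_of C"

definition gcodim :: "geom \<Rightarrow> 'a::euclidean_space \<Rightarrow> 'a set \<Rightarrow> nat" where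
  "gcodim g e C = gdim g TYPE('a) - gsdim g (ghull g e C)"

definition is_thick :: "geom \<Rightarrow> 'a::euclidean_space \<Rightarrow> 'a set \<Rightarrow> bool" where
  "is_thick g e P \<longleftrightarrow> top_of_set (gspace g e) interior_of P \<noteq> {}"

definition is_tessellation :: "geom \<Rightarrow> 'a::euclidean_space \<Rightarrow> 'a set set \<Rightarrow> bool" where
  "is_tessellation g e \<T> \<longleftrightarrow>
     (\<forall>T \<in> \<T>. is_polyhedron g e T \<and> is_thick g e T) \<and>
     \<Union> \<T> = gspace g e \<and>
     (\<forall>T \<in> \<T>. \<forall>T' \<in> \<T>. T \<noteq> T' \<longrightarrow>
        (top_of_set (gspace g e) interior_of T) \<inter> (top_of_set (gspace g e) interior_of T') = {})"

definition is_cell :: "geom \<Rightarrow> 'a::euclidean_space \<Rightarrow> 'a set set \<Rightarrow> 'a set \<Rightarrow> bool" where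
  "is_cell g e \<T> C \<longleftrightarrow> C \<noteq> {} \<and>
     (\<exists>\<S>. \<S> \<subseteq> \<T> \<and> \<S> \<noteq> {} \<and> C = \<Inter> \<S>) \<and>
     (\<forall>T' \<in> \<T>. C \<subseteq> T' \<or> grelint g e C \<inter> T' = {})"

definition is_side :: "geom \<Rightarrow> 'a::euclidean_space \<Rightarrow> 'a set set \<Rightarrow> 'a set \<Rightarrow> bool" where
  "is_side g e \<T> S \<longleftrightarrow> is_cell g e \<T> S \<and> gcodim g e S = 1"

end

theory Submission
  imports Defs
begin


definition Om :: "geom \<Rightarrow> 'a::euclidean_space \<Rightarrow> 'a set" where
  "Om g e = (if g = Euclidean then UNIV else if g = Spherical then - {0}
             else {y. lorentz e y y < 0 \<and> 0 < y \<bullet> e})"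

definition nsc :: "geom \<Rightarrow> 'a::euclidean_space \<Rightarrow> 'a \<Rightarrow> real" where
  "nsc g e y = (if g = Euclidean then 1 else if g = Spherical then 1 / norm y
             else 1 / sqrt (- lorentz e y y))"

definition NN :: "geom \<Rightarrow> 'a::euclidean_space \<Rightarrow> 'a \<Rightarrow> 'a" where
  "NN g e y = nsc g e y *\<^sub>R y"

lemma lorentz_scale: "lorentz e (c *\<^sub>R y) (c *\<^sub>R y) = c\<^sup>2 * lorentz e y y"
  by (simp add: lorentz_def power2_eq_square algebra_simps)

lemma gspace_cases:
  "gspace g e = (if g = Euclidean then UNIV else if g = Spherical then sphere 0 1
       else {x. lorentz e x x = -1 \<and> x \<bullet> e > 0})"
  by (cases g) auto

lemma open_Om: "open (Om g e)"
proof -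
  have "open {y. lorentz e y y < 0 \<and> 0 < y \<bullet> e}"
    unfolding lorentz_def
    by (intro open_Collect_conj open_Collect_less continuous_intros)
  then show ?thesis by (auto simp: Om_def)
qed

lemma gspace_Om: "gspace g e \<subseteq> Om g e"
  by (cases g) (auto simp: Om_def)

lemma nsc_pos: "y \<in> Om g e \<Longrightarrow> nsc g e y > 0"
  by (auto simp: Om_def nsc_def split: if_splits)

lemma NN_in: "y \<in> Om g e \<Longrightarrow> NN g e y \<in> gspace g e"
proof (cases g)
  case Euclidean then show ?thesis by (simp add: NN_def)
next
  case Spherical
  assume "y \<in> Om g e" then show ?thesis using Spherical
    by (auto simp: Om_def NN_def nsc_def)
next
  case Hyperbolic
  assume y: "y \<in> Om g e"
  then have q: "lorentz e y y < 0" "0 < y \<bullet> e" using Hyperbolic by (auto simp: Om_def)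
  have "lorentz e (NN g e y) (NN g e y) = (1 / sqrt (- lorentz e y y))\<^sup>2 * lorentz e y y"
    using Hyperbolic by (simp add: NN_def nsc_def lorentz_scale)
  also have "\<dots> = -1" using q by (simp add: power_divide)
  finally show ?thesis using Hyperbolic q by (simp add: NN_def nsc_def)
qed

lemma NN_id: "y \<in> gspace g e \<Longrightarrow> NN g e y = y"
  by (cases g) (auto simp: NN_def nsc_def)

lemma continuous_on_NN: "continuous_on (Om g e) (NN g e)"
proof (cases g)
  case Euclidean then show ?thesis by (simp add: NN_def nsc_def continuous_on_id)
next
  case Spherical
  then have "NN g e = (\<lambda>y. (1 / norm y) *\<^sub>R y)" by (auto simp: NN_def nsc_def fun_eq_iff)
  moreover have "continuous_on (- {0}) (\<lambda>y::'a. (1 / norm y) *\<^sub>R y)"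
    by (intro continuous_intros) auto
  ultimately show ?thesis using Spherical by (simp add: Om_def)
next
  case Hyperbolic
  then have "NN g e = (\<lambda>y. (1 / sqrt (- lorentz e y y)) *\<^sub>R y)" by (auto simp: NN_def nsc_def fun_eq_iff)
  moreover have "continuous_on {y. lorentz e y y < 0 \<and> 0 < y \<bullet> e} (\<lambda>y::'a. (1 / sqrt (- lorentz e y y)) *\<^sub>R y)"
    unfolding lorentz_def by (intro continuous_intros) auto
  ultimately show ?thesis using Hyperbolic by (simp add: Om_def)
qed

lemma NN_Euclidean: "NN Euclidean e y = y"
  by (simp add: NN_def nsc_def)

lemma zero_notin_gspace: "g \<noteq> Euclidean \<Longrightarrow> 0 \<notin> gspace g e"
  by (cases g) (auto simp: lorentz_def)

definition adm :: "geom \<Rightarrow> 'a::euclidean_space set \<Rightarrow> bool" where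
  "adm g C \<longleftrightarrow> closed C \<and> convex C \<and> (g \<noteq> Euclidean \<longrightarrow> (\<forall>y\<in>C. \<forall>c>0. c *\<^sub>R y \<in> C))"

lemma NN_Euc_or_scale: "g = Euclidean \<Longrightarrow> NN g e y = y"
  by (simp add: NN_Euclidean)

lemma NN_in_adm:
  assumes "adm g C" "y \<in> Om g e"
  shows "NN g e y \<in> C \<longleftrightarrow> y \<in> C"
proof (cases "g = Euclidean")
  case True then show ?thesis by (simp add: NN_Euclidean)
next
  case False
  have c: "nsc g e y > 0" using nsc_pos assms(2) by blast
  have cone: "\<forall>y\<in>C. \<forall>c>0. c *\<^sub>R y \<in> C" using assms(1) False by (simp add: adm_def)
  show ?thesis
  proof
    assume "NN g e y \<in> C"
    then have "(1 / nsc g e y) *\<^sub>R NN g e y \<in> C" using cone c by simp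
    then show "y \<in> C" using c by (simp add: NN_def)
  next
    assume "y \<in> C" then show "NN g e y \<in> C" using cone c by (simp add: NN_def)
  qed
qed

lemma NN_in_subspace:
  assumes "g \<noteq> Euclidean" "subspace L" "y \<in> Om g e"
  shows "NN g e y \<in> L \<longleftrightarrow> y \<in> L"
proof -
  have c: "nsc g e y > 0" using nsc_pos assms(3) by blast
  show ?thesis
  proof
    assume "NN g e y \<in> L"
    then have "(1 / nsc g e y) *\<^sub>R NN g e y \<in> L" using assms(2) by (simp add: subspace_scale)
    then show "y \<in> L" using c by (simp add: NN_def)
  next
    assume "y \<in> L" then show "NN g e y \<in> L" using assms(2) by (simp add: NN_def subspace_scale)
  qed
qed

lemma NN_lin:
  assumes "g \<noteq> Euclidean \<longrightarrow> b = 0" "y \<in> Om g e"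
  shows "a \<bullet> NN g e y \<ge> b \<longleftrightarrow> a \<bullet> y \<ge> b"
    and "a \<bullet> NN g e y > b \<longleftrightarrow> a \<bullet> y > b"
    and "a \<bullet> NN g e y = b \<longleftrightarrow> a \<bullet> y = b"
    and "a \<bullet> NN g e y \<le> b \<longleftrightarrow> a \<bullet> y \<le> b"
proof -
  have c: "nsc g e y > 0" using nsc_pos assms(2) by blast
  have eq: "a \<bullet> NN g e y = nsc g e y * (a \<bullet> y)" by (simp add: NN_def)
  have cs: "g = Euclidean \<or> b = 0" using assms(1) by blast
  show "a \<bullet> NN g e y \<ge> b \<longleftrightarrow> a \<bullet> y \<ge> b" using cs c
    by (cases "g = Euclidean") (auto simp: NN_Euclidean eq zero_le_mult_iff zero_less_mult_iff mult_le_0_iff)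
  show "a \<bullet> NN g e y > b \<longleftrightarrow> a \<bullet> y > b" using cs c
    by (cases "g = Euclidean") (auto simp: NN_Euclidean eq zero_le_mult_iff zero_less_mult_iff mult_le_0_iff)
  show "a \<bullet> NN g e y = b \<longleftrightarrow> a \<bullet> y = b" using cs c
    by (cases "g = Euclidean") (auto simp: NN_Euclidean eq zero_le_mult_iff zero_less_mult_iff mult_le_0_iff)
  show "a \<bullet> NN g e y \<le> b \<longleftrightarrow> a \<bullet> y \<le> b" using cs c
    by (cases "g = Euclidean") (auto simp: NN_Euclidean eq zero_le_mult_iff zero_less_mult_iff mult_le_0_iff mult_less_0_iff)
qed

lemma hyp_Om_norm:
  fixes e :: "'a::euclidean_space"
  assumes "norm e = 1"
  shows "(lorentz e y y < 0 \<and> 0 < y \<bullet> e) \<longleftrightarrow> norm (y - (y \<bullet> e) *\<^sub>R e) < y \<bullet> e"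
proof -
  have ee: "e \<bullet> e = 1" using assms by (simp add: dot_square_norm)
  have "(norm (y - (y \<bullet> e) *\<^sub>R e))\<^sup>2 = (y - (y \<bullet> e) *\<^sub>R e) \<bullet> (y - (y \<bullet> e) *\<^sub>R e)"
    by (simp only: power2_norm_eq_inner)
  also have "\<dots> = y \<bullet> y - (y \<bullet> e)\<^sup>2"
    by (simp add: inner_diff_left inner_diff_right inner_commute ee power2_eq_square)
  finally have "(norm (y - (y \<bullet> e) *\<^sub>R e))\<^sup>2 = y \<bullet> y - (y \<bullet> e)\<^sup>2" .
  then have n2: "(norm (y - (y \<bullet> e) *\<^sub>R e))\<^sup>2 = lorentz e y y + (y \<bullet> e)\<^sup>2"
    by (simp add: lorentz_def power2_eq_square)
  show ?thesis
  proof
    assume a: "lorentz e y y < 0 \<and> 0 < y \<bullet> e"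
    then have "(norm (y - (y \<bullet> e) *\<^sub>R e))\<^sup>2 < (y \<bullet> e)\<^sup>2" using n2 by simp
    then show "norm (y - (y \<bullet> e) *\<^sub>R e) < y \<bullet> e" using a
      using power2_less_imp_less[of "norm (y - (y \<bullet> e) *\<^sub>R e)" "y \<bullet> e"] by simp
  next
    assume a: "norm (y - (y \<bullet> e) *\<^sub>R e) < y \<bullet> e"
    then have pos: "0 < y \<bullet> e" by (meson norm_ge_zero le_less_trans)
    have "(norm (y - (y \<bullet> e) *\<^sub>R e))\<^sup>2 < (y \<bullet> e)\<^sup>2"
      using a by (simp add: power_strict_mono)
    then show "lorentz e y y < 0 \<and> 0 < y \<bullet> e" using n2 pos by simp
  qed
qed

lemma convex_hyp_Om:
  fixes e :: "'a::euclidean_space"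
  assumes "norm e = 1"
  shows "convex {y. lorentz e y y < 0 \<and> 0 < y \<bullet> e}"
proof -
  have eq: "{y. lorentz e y y < 0 \<and> 0 < y \<bullet> e} = {y. norm (y - (y \<bullet> e) *\<^sub>R e) < y \<bullet> e}"
    using hyp_Om_norm[OF assms] by blast
  show ?thesis unfolding eq convex_def
  proof (clarsimp)
    fix x y :: 'a and u v :: real
    assume x: "norm (x - (x \<bullet> e) *\<^sub>R e) < x \<bullet> e" and y: "norm (y - (y \<bullet> e) *\<^sub>R e) < y \<bullet> e"
      and uv: "0 \<le> u" "0 \<le> v" "u + v = 1"
    have lin: "(u *\<^sub>R x + v *\<^sub>R y) - ((u *\<^sub>R x + v *\<^sub>R y) \<bullet> e) *\<^sub>R e
       = u *\<^sub>R (x - (x \<bullet> e) *\<^sub>R e) + v *\<^sub>R (y - (y \<bullet> e) *\<^sub>R e)"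
      by (simp add: algebra_simps inner_add_left)
    have "norm (u *\<^sub>R (x - (x \<bullet> e) *\<^sub>R e) + v *\<^sub>R (y - (y \<bullet> e) *\<^sub>R e))
        \<le> u * norm (x - (x \<bullet> e) *\<^sub>R e) + v * norm (y - (y \<bullet> e) *\<^sub>R e)"
      using uv by (metis (no_types, lifting) abs_of_nonneg norm_scaleR norm_triangle_ineq)
    also have "\<dots> < u * (x \<bullet> e) + v * (y \<bullet> e)"
    proof (cases "u = 0")
      case True then show ?thesis using uv y by simp
    next
      case False then have "u > 0" using uv by simp
      then show ?thesis using x y uv
        by (smt (verit, best) mult_left_mono mult_strict_left_mono)
    qed
    finally show "norm ((u *\<^sub>R x + v *\<^sub>R y) - ((u *\<^sub>R x + v *\<^sub>R y) \<bullet> e) *\<^sub>R e) < (u *\<^sub>R x + v *\<^sub>R y) \<bullet> e"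
      unfolding lin by (simp add: inner_add_left)
  qed
qed

lemma convex_Om_half:
  fixes e :: "'a::euclidean_space"
  assumes "e \<in> Basis" "g \<noteq> Euclidean \<longrightarrow> b = 0"
  shows "convex (Om g e \<inter> {y. a \<bullet> y > b})"
proof (cases g)
  case Euclidean then show ?thesis by (simp add: Om_def convex_halfspace_gt)
next
  case Spherical
  then have "Om g e \<inter> {y. a \<bullet> y > b} = {y. a \<bullet> y > 0}" using assms by (auto simp: Om_def)
  then show ?thesis by (simp add: convex_halfspace_gt)
next
  case Hyperbolic
  then show ?thesis using assms
    by (auto simp: Om_def intro!: convex_Int convex_hyp_Om convex_halfspace_gt)
qed


lemma open_vimage_NN: "open V \<Longrightarrow> open (Om g e \<inter> NN g e -` V)"
proof -
  assume V: "open V"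
  have "open (NN g e -` V \<inter> Om g e)"
    using continuous_on_open_vimage[OF open_Om, of g e "NN g e"] continuous_on_NN[of g e] V by blast
  then show ?thesis by (simp add: Int_commute)
qed

lemma dim_ge1:
  assumes "g \<noteq> Euclidean" "S \<subseteq> gspace g e" "S \<noteq> {}"
  shows "dim S \<ge> 1"
proof -
  have "\<not> S \<subseteq> {0}" using assms zero_notin_gspace by blast
  then have "dim S \<noteq> 0" using dim_eq_0[of S] by blast
  then show ?thesis by linarith
qed

lemma gdim_nonE: "g \<noteq> Euclidean \<Longrightarrow> gdim g TYPE('a::euclidean_space) = DIM('a) - 1"
  by (cases g) auto

lemma gdim_E: "gdim Euclidean TYPE('a::euclidean_space) = DIM('a)"
  by simp

lemma hyperplane_form:
  fixes e :: "'a::euclidean_space"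
  assumes "e \<in> Basis" "is_ghyperplane g e H"
  shows "\<exists>a b. a \<noteq> 0 \<and> (g \<noteq> Euclidean \<longrightarrow> b = 0) \<and> H = gspace g e \<inter> {y. a \<bullet> y = b}"
proof (cases "g = Euclidean")
  case True
  have H0: "is_gsubspace g e H" "gsdim g H + 1 = gdim g TYPE('a)"
    using assms(2) unfolding is_ghyperplane_def by auto
  have H: "H \<noteq> {}" "affine H" using H0(1) True unfolding is_gsubspace_def by auto
  have H3: "nat (aff_dim H) + 1 = DIM('a)" using H0(2) True unfolding gsdim_def by simp
  have "aff_dim H \<ge> 0" using H(1) aff_dim_negative_iff[of H] by linarith
  then have "aff_dim H = int DIM('a) - 1" using H3 by linarith
  then have "\<exists>a b. a \<noteq> 0 \<and> affine hull H = {x. a \<bullet> x = b}"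
    using aff_dim_eq_hyperplane[of H] by simp
  then obtain a b where ab: "a \<noteq> 0" "affine hull H = {x. a \<bullet> x = b}"
    by blast
  have "H = {x. a \<bullet> x = b}" using ab(2) H(2) by (metis affine_hull_eq)
  then have "H = gspace g e \<inter> {y. a \<bullet> y = b}" using True by simp
  then show ?thesis using ab(1) True by blast
next
  case False
  have H0: "is_gsubspace g e H" "gsdim g H + 1 = gdim g TYPE('a)"
    using assms(2) unfolding is_ghyperplane_def by auto
  obtain L where L: "H \<noteq> {}" "subspace L" "H = gspace g e \<inter> L"
    using H0(1) False unfolding is_gsubspace_def by auto
  have L4: "dim (span H) - 1 + 1 = DIM('a) - 1"
    using H0(2) False gdim_nonE[OF False] unfolding gsdim_def by simp
  have "dim H \<ge> 1" using dim_ge1[OF False _ L(1)] L(3) by blast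
  then have dH: "dim H = DIM('a) - 1" using L4 by (simp add: dim_span)
  obtain a where a: "a \<noteq> 0" "span H = {x. a \<bullet> x = 0}"
    using dim_eq_hyperplane[of H] dH by blast
  have "span H \<subseteq> L" using L span_minimal by blast
  then have "H = gspace g e \<inter> span H" using L(3) span_superset[of H] by blast
  then have "H = gspace g e \<inter> {y. a \<bullet> y = 0}" using a(2) by simp
  then show ?thesis using a(1) False by blast
qed

lemma side_image:
  fixes e :: "'a::euclidean_space"
  assumes "g \<noteq> Euclidean \<longrightarrow> b = 0"
  shows "gspace g e \<inter> {y. a \<bullet> y > b} = NN g e ` (Om g e \<inter> {y. a \<bullet> y > b})"
proof
  show "gspace g e \<inter> {y. a \<bullet> y > b} \<subseteq> NN g e ` (Om g e \<inter> {y. a \<bullet> y > b})"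
  proof
    fix y assume y: "y \<in> gspace g e \<inter> {y. a \<bullet> y > b}"
    then have "y = NN g e y" "y \<in> Om g e" using NN_id[of y g e] gspace_Om[of g e] by auto
    then show "y \<in> NN g e ` (Om g e \<inter> {y. a \<bullet> y > b})" using y by blast
  qed
  show "NN g e ` (Om g e \<inter> {y. a \<bullet> y > b}) \<subseteq> gspace g e \<inter> {y. a \<bullet> y > b}"
  proof clarify
    fix x assume x: "x \<in> Om g e" "b < a \<bullet> x"
    show "NN g e x \<in> gspace g e \<inter> {y. a \<bullet> y > b}"
      using NN_in[OF x(1)] NN_lin(2)[OF assms x(1), where a=a] x(2) by simp
  qed
qed

lemma side_connected:
  fixes e :: "'a::euclidean_space"
  assumes "e \<in> Basis" "g \<noteq> Euclidean \<longrightarrow> b = 0"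
  shows "connected (gspace g e \<inter> {y. a \<bullet> y > b})"
  unfolding side_image[OF assms(2)]
  by (intro connected_continuous_image continuous_on_subset[OF continuous_on_NN]
        convex_connected convex_Om_half assms) auto

lemma side_closure:
  fixes e :: "'a::euclidean_space"
  assumes "a \<noteq> 0" "g \<noteq> Euclidean \<longrightarrow> b = 0"
  shows "top_of_set (gspace g e) closure_of (gspace g e \<inter> {y. a \<bullet> y > b})
          = gspace g e \<inter> {y. a \<bullet> y \<ge> b}"
proof
  show "top_of_set (gspace g e) closure_of (gspace g e \<inter> {y. a \<bullet> y > b})
          \<subseteq> gspace g e \<inter> {y. a \<bullet> y \<ge> b}"
    by (intro closure_of_minimal closedin_closed_Int closed_halfspace_ge) auto
  show "gspace g e \<inter> {y. a \<bullet> y \<ge> b} \<subseteq> top_of_set (gspace g e) closure_of (gspace g e \<inter> {y. a \<bullet> y > b})"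
  proof
    fix y0 assume y0: "y0 \<in> gspace g e \<inter> {y. a \<bullet> y \<ge> b}"
    show "y0 \<in> top_of_set (gspace g e) closure_of (gspace g e \<inter> {y. a \<bullet> y > b})"
      unfolding in_closure_of
    proof (intro conjI allI impI)
      show "y0 \<in> topspace (top_of_set (gspace g e))" using y0 by simp
      fix T assume T: "y0 \<in> T \<and> openin (top_of_set (gspace g e)) T"
      then obtain V where V: "open V" "T = gspace g e \<inter> V" by (auto simp: openin_open)
      have y0W: "y0 \<in> Om g e \<inter> NN g e -` V" using y0 T V NN_id[of y0 g e] gspace_Om[of g e] by auto
      obtain \<epsilon> where \<epsilon>: "\<epsilon> > 0" "ball y0 \<epsilon> \<subseteq> Om g e \<inter> NN g e -` V"
        using open_vimage_NN[OF V(1), of g e] y0W open_contains_ball by blast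
      define w where "w = y0 + (\<epsilon> / (2 * norm a)) *\<^sub>R a"
      have na: "norm a > 0" using assms(1) by simp
      have "dist y0 w = \<epsilon> / 2" using na \<epsilon>(1) by (simp add: w_def dist_norm)
      then have "w \<in> ball y0 \<epsilon>" using \<epsilon>(1) by simp
      then have w: "w \<in> Om g e" "NN g e w \<in> V" using \<epsilon>(2) by auto
      have "a \<bullet> w = a \<bullet> y0 + (\<epsilon> / (2 * norm a)) * (a \<bullet> a)" by (simp add: w_def inner_add_right)
      also have "(\<epsilon> / (2 * norm a)) * (a \<bullet> a) = \<epsilon> * norm a / 2"
        using na by (simp add: dot_square_norm power2_eq_square)
      moreover have "\<epsilon> * norm a / 2 > 0" using \<epsilon>(1) na by simp
      moreover have "a \<bullet> y0 \<ge> b" using y0 by simp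
      ultimately have "a \<bullet> w > b" by linarith
      then have "a \<bullet> NN g e w > b" using NN_lin(2)[OF assms(2) w(1)] by simp
      then show "\<exists>y. y \<in> gspace g e \<inter> {y. a \<bullet> y > b} \<and> y \<in> T"
        using w NN_in V(2) by blast
    qed
  qed
qed

lemma halfspace_form:
  fixes e :: "'a::euclidean_space"
  assumes "e \<in> Basis" "is_halfspace_of g e H K"
  shows "\<exists>a b. a \<noteq> 0 \<and> (g \<noteq> Euclidean \<longrightarrow> b = 0) \<and> K = gspace g e \<inter> {y. a \<bullet> y \<ge> b}"
proof -
  obtain U where U: "U \<in> components (gspace g e - H)" "K = top_of_set (gspace g e) closure_of U"
    and hp: "is_ghyperplane g e H" using assms(2) by (auto simp: is_halfspace_of_def)
  obtain a b where ab: "a \<noteq> 0" "g \<noteq> Euclidean \<longrightarrow> b = 0" "H = gspace g e \<inter> {y. a \<bullet> y = b}"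
    using hyperplane_form[OF assms(1) hp] by blast
  have Uc: "connected U" "U \<noteq> {}" "U \<subseteq> gspace g e - H"
    using in_components_connected[OF U(1)] in_components_nonempty[OF U(1)] in_components_subset[OF U(1)]
    by auto
  have key: "\<And>a b. a \<noteq> 0 \<Longrightarrow> (g \<noteq> Euclidean \<longrightarrow> b = 0) \<Longrightarrow> U \<subseteq> gspace g e \<inter> {y. a \<bullet> y > b}
       \<Longrightarrow> gspace g e \<inter> {y. a \<bullet> y > b} \<subseteq> gspace g e - H
       \<Longrightarrow> K = gspace g e \<inter> {y. a \<bullet> y \<ge> b}"
  proof -
    fix a' b' assume h: "(a'::'a) \<noteq> 0" "g \<noteq> Euclidean \<longrightarrow> b' = 0"
      "U \<subseteq> gspace g e \<inter> {y. a' \<bullet> y > b'}" "gspace g e \<inter> {y. a' \<bullet> y > b'} \<subseteq> gspace g e - H"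
    have "gspace g e \<inter> {y. a' \<bullet> y > b'} \<subseteq> U"
      using components_maximal[OF U(1) side_connected[OF assms(1) h(2)] h(4)] h(3) Uc(2) by blast
    then have "U = gspace g e \<inter> {y. a' \<bullet> y > b'}" using h(3) by blast
    then show "K = gspace g e \<inter> {y. a' \<bullet> y \<ge> b'}" using U(2) side_closure[OF h(1,2)] by simp
  qed
  show ?thesis
  proof (cases "\<exists>u\<in>U. a \<bullet> u > b")
    case True
    then obtain u where u: "u \<in> U" "a \<bullet> u > b" by blast
    have "U \<subseteq> gspace g e \<inter> {y. a \<bullet> y > b}"
    proof
      fix v assume v: "v \<in> U"
      show "v \<in> gspace g e \<inter> {y. a \<bullet> y > b}"
      proof (rule ccontr)
        assume "v \<notin> gspace g e \<inter> {y. a \<bullet> y > b}"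
        then have "a \<bullet> v \<le> b" using v Uc(3) by auto
        then obtain z where "z \<in> U" "a \<bullet> z = b"
          using connected_ivt_hyperplane[OF Uc(1) v u(1), of a b] u(2) by auto
        then show False using Uc(3) ab(3) by auto
      qed
    qed
    moreover have "gspace g e \<inter> {y. a \<bullet> y > b} \<subseteq> gspace g e - H" using ab(3) by auto
    ultimately show ?thesis using key[OF ab(1,2)] ab by blast
  next
    case False
    have "U \<subseteq> gspace g e \<inter> {y. (-a) \<bullet> y > -b}"
    proof
      fix v assume v: "v \<in> U"
      then have "a \<bullet> v \<le> b" "a \<bullet> v \<noteq> b" using False Uc(3) ab(3) by auto
      then show "v \<in> gspace g e \<inter> {y. (-a) \<bullet> y > -b}" using v Uc(3) by auto
    qed
    moreover have "gspace g e \<inter> {y. (-a) \<bullet> y > -b} \<subseteq> gspace g e - H" using ab(3) by auto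
    moreover have "-a \<noteq> 0" "g \<noteq> Euclidean \<longrightarrow> -b = 0" using ab by auto
    ultimately show ?thesis using key[of "-a" "-b"] by blast
  qed
qed

lemma polyhedron_form:
  fixes e :: "'a::euclidean_space"
  assumes "e \<in> Basis" "is_polyhedron g e P"
  shows "\<exists>C. adm g C \<and> P = gspace g e \<inter> C"
proof -
  obtain F :: "('a set \<times> 'a set) set" where F: "\<forall>(H, K) \<in> F. is_halfspace_of g e H K"
    "P = gspace g e \<inter> \<Inter> (snd ` F)"
    using assms(2) by (auto simp: is_polyhedron_def)
  have "\<forall>K\<in>snd ` F. \<exists>ab. fst ab \<noteq> 0 \<and> (g \<noteq> Euclidean \<longrightarrow> snd ab = 0) \<and>
          K = gspace g e \<inter> {y. fst ab \<bullet> y \<ge> snd ab}"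
  proof
    fix K assume "K \<in> snd ` F"
    then obtain H where "(H, K) \<in> F" by auto
    then have "is_halfspace_of g e H K" using F(1) by auto
    then obtain a b where "a \<noteq> 0 \<and> (g \<noteq> Euclidean \<longrightarrow> b = 0) \<and> K = gspace g e \<inter> {y. a \<bullet> y \<ge> b}"
      using halfspace_form[OF assms(1)] by blast
    then show "\<exists>ab. fst ab \<noteq> 0 \<and> (g \<noteq> Euclidean \<longrightarrow> snd ab = 0) \<and>
          K = gspace g e \<inter> {y. fst ab \<bullet> y \<ge> snd ab}" by (intro exI[of _ "(a, b)"]) auto
  qed
  then obtain h where h: "\<forall>K\<in>snd ` F. fst (h K) \<noteq> 0 \<and> (g \<noteq> Euclidean \<longrightarrow> snd (h K) = 0) \<and>
          K = gspace g e \<inter> {y. fst (h K) \<bullet> y \<ge> snd (h K)}"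
    by metis
  define C where "C = (\<Inter>K\<in>snd ` F. {y. fst (h K) \<bullet> y \<ge> snd (h K)})"
  have "P = gspace g e \<inter> C"
  proof -
    have "gspace g e \<inter> \<Inter> (snd ` F) = gspace g e \<inter> C"
    proof (intro equalityI subsetI)
      fix y assume "y \<in> gspace g e \<inter> \<Inter> (snd ` F)"
      then show "y \<in> gspace g e \<inter> C" unfolding C_def using h by blast
    next
      fix y assume y: "y \<in> gspace g e \<inter> C"
      show "y \<in> gspace g e \<inter> \<Inter> (snd ` F)"
      proof (clarsimp simp: y[THEN IntD1])
        fix H K assume "(H, K) \<in> F"
        then have K: "K \<in> snd ` F" by force
        then have "y \<in> {y. fst (h K) \<bullet> y \<ge> snd (h K)}" using y unfolding C_def by blast
        then show "y \<in> K" using h K y by blast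
      qed
    qed
    then show ?thesis using F(2) by simp
  qed
  moreover have "adm g C"
    unfolding adm_def
  proof (intro conjI impI)
    show "closed C" unfolding C_def by (intro closed_INT ballI closed_halfspace_ge)
    show "convex C" unfolding C_def by (intro convex_INT ballI convex_halfspace_ge)
    assume ne: "g \<noteq> Euclidean"
    have h0: "\<forall>K\<in>snd ` F. snd (h K) = 0" using h ne by blast
    show "\<forall>y\<in>C. \<forall>c>0. c *\<^sub>R y \<in> C"
    proof (intro ballI allI impI)
      fix y :: 'a and c :: real assume y: "y \<in> C" and c: "c > 0"
      show "c *\<^sub>R y \<in> C" unfolding C_def
      proof (rule INT_I)
        fix K assume K: "K \<in> snd ` F"
        then have "fst (h K) \<bullet> y \<ge> 0" using y h0 unfolding C_def by force
        moreover have "snd (h K) = 0" using h0 K by blast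
        ultimately show "c *\<^sub>R y \<in> {y. fst (h K) \<bullet> y \<ge> snd (h K)}" using c by simp
      qed
    qed
  qed
  ultimately show ?thesis by blast
qed



lemma int_lift_gen:
  assumes "y \<in> top_of_set (gspace g e) interior_of S"
  shows "\<exists>W. open W \<and> y \<in> W \<and> W \<subseteq> Om g e \<and> NN g e ` W \<subseteq> S"
proof -
  obtain T where T: "openin (top_of_set (gspace g e)) T" "y \<in> T" "T \<subseteq> S"
    using assms by (auto simp: interior_of_def)
  obtain V where V: "open V" "T = gspace g e \<inter> V" using T(1) by (auto simp: openin_open)
  define W where "W = Om g e \<inter> NN g e -` V"
  have "open W" unfolding W_def using open_vimage_NN[OF V(1)] .
  moreover have "y \<in> W" using T(2) V(2) NN_id[of y g e] gspace_Om[of g e] by (auto simp: W_def)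
  moreover have "NN g e ` W \<subseteq> S" using NN_in V(2) T(3) by (auto simp: W_def)
  ultimately show ?thesis by (auto simp: W_def)
qed

lemma int_lift:
  assumes "adm g C" "y \<in> top_of_set (gspace g e) interior_of (gspace g e \<inter> C)"
  shows "y \<in> interior C"
proof -
  obtain W where W: "open W" "y \<in> W" "W \<subseteq> Om g e" "NN g e ` W \<subseteq> gspace g e \<inter> C"
    using int_lift_gen[OF assms(2)] by blast
  have "W \<subseteq> C"
  proof
    fix w assume "w \<in> W"
    then have "NN g e w \<in> C" "w \<in> Om g e" using W by auto
    then show "w \<in> C" using NN_in_adm[OF assms(1)] by blast
  qed
  then show ?thesis using W interiorI by blast
qed

lemma cone_interior:
  fixes C :: "'a::euclidean_space set"
  assumes "\<forall>y\<in>C. \<forall>c>0. c *\<^sub>R y \<in> C" "y \<in> interior C" "c > 0"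
  shows "c *\<^sub>R y \<in> interior C"
proof -
  obtain r where r: "r > 0" "ball y r \<subseteq> C" using assms(2) open_contains_ball_eq open_interior interior_subset
    by (metis mem_interior)
  have "ball (c *\<^sub>R y) (c * r) \<subseteq> C"
  proof
    fix z assume z: "z \<in> ball (c *\<^sub>R y) (c * r)"
    have "dist y ((1 / c) *\<^sub>R z) = (1 / c) * dist (c *\<^sub>R y) z"
    proof -
      have "y - (1 / c) *\<^sub>R z = (1 / c) *\<^sub>R (c *\<^sub>R y - z)" using assms(3) by (simp add: algebra_simps)
      then show ?thesis using assms(3) by (simp add: dist_norm)
    qed
    also have "\<dots> < (1 / c) * (c * r)" using z assms(3) by (simp add: pos_divide_less_eq mult.commute)
    also have "\<dots> = r" using assms(3) by simp
    finally have "(1 / c) *\<^sub>R z \<in> C" using r(2) by auto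
    then have "c *\<^sub>R ((1 / c) *\<^sub>R z) \<in> C" using assms(1,3) by blast
    then show "z \<in> C" using assms(3) by simp
  qed
  then show ?thesis using r(1) assms(3)
    by (meson centre_in_ball interiorI mult_pos_pos open_ball)
qed

lemma int_drop:
  assumes "adm g C" "y \<in> Om g e" "y \<in> interior C"
  shows "NN g e y \<in> top_of_set (gspace g e) interior_of (gspace g e \<inter> C)"
proof -
  have "NN g e y \<in> interior C"
  proof (cases "g = Euclidean")
    case True then show ?thesis using assms by (simp add: NN_Euclidean)
  next
    case False
    then have "\<forall>y\<in>C. \<forall>c>0. c *\<^sub>R y \<in> C" using assms(1) by (simp add: adm_def)
    then show ?thesis unfolding NN_def using cone_interior assms nsc_pos by blast
  qed
  moreover have "openin (top_of_set (gspace g e)) (gspace g e \<inter> interior C)" by auto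
  moreover have "gspace g e \<inter> interior C \<subseteq> gspace g e \<inter> C" using interior_subset by blast
  ultimately show ?thesis using NN_in[OF assms(2)]
    by (meson IntI in_mono interior_of_maximal)
qed

lemma adm_closure_interior:
  assumes "adm g C" "interior C \<noteq> {}"
  shows "closure (interior C) = C"
  using assms convex_closure_interior[of C] by (simp add: adm_def closure_closed)

lemma tile_closure_interior:
  assumes "adm g C" "top_of_set (gspace g e) interior_of (gspace g e \<inter> C) \<noteq> {}"
  shows "gspace g e \<inter> C \<subseteq> top_of_set (gspace g e) closure_of (top_of_set (gspace g e) interior_of (gspace g e \<inter> C))"
proof
  fix z assume z: "z \<in> gspace g e \<inter> C"
  have ne: "interior C \<noteq> {}" using assms int_lift by blast
  have zc: "z \<in> closure (interior C)" using adm_closure_interior[OF assms(1) ne] z by simp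
  show "z \<in> top_of_set (gspace g e) closure_of (top_of_set (gspace g e) interior_of (gspace g e \<inter> C))"
    unfolding in_closure_of
  proof (intro conjI allI impI)
    show "z \<in> topspace (top_of_set (gspace g e))" using z by simp
    fix T assume T: "z \<in> T \<and> openin (top_of_set (gspace g e)) T"
    then obtain V where V: "open V" "T = gspace g e \<inter> V" by (auto simp: openin_open)
    define W where "W = Om g e \<inter> NN g e -` V"
    have oW: "open W" unfolding W_def using open_vimage_NN[OF V(1)] .
    have "z \<in> W" using z T V NN_id[of z g e] gspace_Om[of g e] by (auto simp: W_def)
    then have "W \<inter> closure (interior C) \<noteq> {}" using zc by blast
    then have "W \<inter> interior C \<noteq> {}" using open_Int_closure_eq_empty[OF oW] by blast
    then obtain w where w: "w \<in> W" "w \<in> interior C" by blast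
    have "NN g e w \<in> top_of_set (gspace g e) interior_of (gspace g e \<inter> C)"
      using int_drop[OF assms(1) _ w(2)] w(1) by (auto simp: W_def)
    moreover have "NN g e w \<in> T" using w(1) V(2) NN_in by (auto simp: W_def)
    ultimately show "\<exists>y. y \<in> top_of_set (gspace g e) interior_of (gspace g e \<inter> C) \<and> y \<in> T" by blast
  qed
qed

lemma adm_zero:
  assumes "adm g C" "g \<noteq> Euclidean" "C \<noteq> {}"
  shows "0 \<in> C"
proof -
  obtain s where s: "s \<in> C" using assms(3) by blast
  have cone: "\<forall>y\<in>C. \<forall>c>0. c *\<^sub>R y \<in> C" using assms(1,2) by (simp add: adm_def)
  have "0 \<in> closure C"
    unfolding closure_approachable
  proof (intro allI impI)
    fix \<epsilon> :: real assume \<epsilon>: "\<epsilon> > 0"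
    define t where "t = \<epsilon> / (norm s + 1)"
    have "norm s + 1 > 0" by (simp add: add_nonneg_pos)
    then have t: "t > 0" using \<epsilon> by (simp add: t_def)
    have "norm (t *\<^sub>R s) = t * norm s" using t by simp
    also have "\<dots> < \<epsilon>"
    proof -
      have "t * norm s < t * (norm s + 1)" using t by simp
      also have "\<dots> = \<epsilon>" using \<open>norm s + 1 > 0\<close> by (simp add: t_def)
      finally show ?thesis .
    qed
    finally show "\<exists>y\<in>C. dist y 0 < \<epsilon>" using cone s t by (intro bexI[of _ "t *\<^sub>R s"]) auto
  qed
  then show ?thesis using assms(1) by (simp add: adm_def closure_closed)
qed

lemma span_ghull:
  assumes "S \<subseteq> gspace g e"
  shows "span (gspace g e \<inter> span S) = span S"
proof
  show "span (gspace g e \<inter> span S) \<subseteq> span S" by (simp add: span_minimal)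
  show "span S \<subseteq> span (gspace g e \<inter> span S)" using assms span_superset[of S]
    by (intro span_mono) auto
qed

lemma full_interior:
  assumes "adm g C" "gspace g e \<inter> C \<noteq> {}"
    "gsdim g (ghull g e (gspace g e \<inter> C)) \<ge> gdim g TYPE('a::euclidean_space)"
  shows "top_of_set (gspace g e) interior_of (gspace g e \<inter> (C::'a set)) \<noteq> {}"
proof (cases "g = Euclidean")
  case True
  then have S: "gspace g e \<inter> C = C" by simp
  have "nat (aff_dim C) \<ge> DIM('a)" using assms(3) True S by (simp add: gsdim_def ghull_def)
  then have "int DIM('a) \<le> aff_dim C"
    using DIM_positive[where 'a='a] by (cases "aff_dim C \<ge> 0") (auto simp: le_nat_iff)
  then have "aff_dim C = DIM('a)" using aff_dim_le_DIM[of C] by linarith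
  then have "affine hull C = UNIV" using aff_dim_eq_full by blast
  then have "rel_interior C = interior C" by (rule rel_interior_interior)
  moreover have "rel_interior C \<noteq> {}" using assms(1,2) rel_interior_eq_empty[of C] by (auto simp: adm_def)
  ultimately show ?thesis using True by simp
next
  case False
  define S where "S = gspace g e \<inter> C"
  have SX: "S \<subseteq> gspace g e" by (simp add: S_def)
  have dS: "dim (gspace g e \<inter> span S) = dim S" by (metis dim_span span_ghull[OF SX])
  have "dim (span S) - 1 \<ge> DIM('a) - 1"
    using assms(3) False gdim_nonE[OF False, where 'a='a] dS by (simp add: gsdim_def ghull_def S_def)
  moreover have "dim S \<ge> 1" using dim_ge1[OF False SX] assms(2) by (simp add: S_def)
  ultimately have "dim S \<ge> DIM('a)" by simp
  then have "dim S = DIM('a)" using dim_subset_UNIV[of S] by simp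
  then have spS: "span S = UNIV" using dim_eq_full[of S] by simp
  obtain s where s: "s \<in> S" using assms(2) S_def by blast
  have cone: "\<forall>y\<in>C. \<forall>c>0. c *\<^sub>R y \<in> C" using assms(1) False by (simp add: adm_def)
  have s1: "s \<in> C" using s by (simp add: S_def)
  have sC: "s \<in> C" "2 *\<^sub>R s \<in> C" using s1 cone[rule_format, OF s1, of 2] by auto
  have "0 \<in> affine hull C"
  proof -
    have aff: "\<forall>x\<in>affine hull C. \<forall>y\<in>affine hull C. \<forall>u v. u + v = 1 \<longrightarrow> u *\<^sub>R x + v *\<^sub>R y \<in> affine hull C"
      using affine_affine_hull[of C] unfolding affine_def .
    have h1: "s \<in> affine hull C" "2 *\<^sub>R s \<in> affine hull C" using sC by (simp_all add: hull_inc)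
    show ?thesis using aff[rule_format, OF h1, of 2 "-1"] by simp
  qed
  then have "affine hull C = span C" by (rule affine_hull_span_0)
  moreover have "span S \<subseteq> span C" by (intro span_mono) (auto simp: S_def)
  ultimately have "affine hull C = UNIV" using spS by auto
  then have "rel_interior C = interior C" by (rule rel_interior_interior)
  moreover have "rel_interior C \<noteq> {}"
  proof -
    have "convex C" using assms(1) by (simp add: adm_def)
    then show ?thesis using rel_interior_eq_empty[of C] sC by blast
  qed
  ultimately have ne: "interior C \<noteq> {}" by simp
  have "s \<in> closure (interior C)" using adm_closure_interior[OF assms(1) ne] sC by simp
  moreover have "s \<in> Om g e" using s gspace_Om[of g e] by (auto simp: S_def)
  ultimately have "Om g e \<inter> closure (interior C) \<noteq> {}" by blast
  then have "Om g e \<inter> interior C \<noteq> {}"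
    by (metis open_Int_closure_eq_empty open_Om)
  then obtain w where w: "w \<in> Om g e" "w \<in> interior C" by blast
  then show ?thesis using int_drop[OF assms(1) w] by blast
qed

lemma thick_full:
  fixes S :: "'a::euclidean_space set"
  assumes "S \<subseteq> gspace g e" "top_of_set (gspace g e) interior_of S \<noteq> {}"
  shows "gsdim g (ghull g e S) \<ge> gdim g TYPE('a::euclidean_space)"
proof (cases "g = Euclidean")
  case True
  then have "interior S \<noteq> {}" using assms(2) by simp
  then have "aff_dim S = DIM('a)" by (rule aff_dim_nonempty_interior)
  then show ?thesis using True by (simp add: gsdim_def ghull_def)
next
  case False
  obtain y where y: "y \<in> top_of_set (gspace g e) interior_of S" using assms(2) by blast
  obtain W where W: "open W" "y \<in> W" "W \<subseteq> Om g e" "NN g e ` W \<subseteq> (S::'a set)"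
    using int_lift_gen[OF y] by blast
  have "W \<subseteq> span S"
  proof
    fix w assume w: "w \<in> W"
    then have c: "nsc g e w > 0" using W(3) nsc_pos by blast
    have "NN g e w \<in> span S" using W(4) w span_superset[of S] by blast
    then have "(1 / nsc g e w) *\<^sub>R NN g e w \<in> span S" by (rule span_mul)
    then show "w \<in> span S" using c by (simp add: NN_def)
  qed
  then have "dim W \<le> dim (span S)" by (rule dim_subset)
  moreover have "dim W = DIM('a)"
  proof -
    have o: "openin (top_of_set UNIV) W" using W(1) by simp
    have "W \<noteq> {}" using W(2) by blast
    then have "dim W = dim (UNIV :: 'a set)" using dim_openin[OF o subspace_UNIV] by blast
    then show ?thesis by simp
  qed
  ultimately have "dim S \<ge> DIM('a)" by simp
  moreover have dS: "dim (gspace g e \<inter> span S) = dim S" by (metis dim_span span_ghull[OF assms(1)])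
  ultimately show ?thesis using False gdim_nonE[OF False, where 'a='a]
    by (simp add: gsdim_def ghull_def)
qed



lemma cone_trick:
  fixes C :: "'a::euclidean_space set"
  assumes "convex C" "q \<in> C" "a \<bullet> q < b" "a \<bullet> p = b" "p \<in> C" "open V" "p \<in> V"
    "\<forall>w\<in>V. a \<bullet> w = b \<longrightarrow> w \<in> C"
  shows "\<exists>\<delta>>0. \<forall>w. dist w p < \<delta> \<and> a \<bullet> w \<le> b \<longrightarrow> w \<in> C"
proof -
  define lam where "lam = (\<lambda>w. (1 / (b - a \<bullet> q)) * (b - a \<bullet> w))"
  define f where "f = (\<lambda>w. (1 / (1 - lam w)) *\<^sub>R (w - lam w *\<^sub>R q))"
  have bq: "b - a \<bullet> q > 0" using assms(3) by simp
  have lp: "lam p = 0" using assms(4) by (simp add: lam_def)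
  have fp: "f p = p" using lp by (simp add: f_def)
  have cl: "continuous (at p) lam" unfolding lam_def by (intro continuous_intros)
  have cf: "continuous (at p) f" unfolding f_def
    by (intro continuous_intros cl) (use lp in simp)
  have t1: "(f \<longlongrightarrow> p) (at p)" using cf fp unfolding continuous_at by simp
  have ev1: "eventually (\<lambda>w. f w \<in> V) (at p)"
    by (rule topological_tendstoD[OF t1 assms(6,7)])
  have t2: "(lam \<longlongrightarrow> 0) (at p)" using cl lp unfolding continuous_at by simp
  have ev2: "eventually (\<lambda>w. lam w < 1) (at p)"
    using order_tendstoD(2)[OF t2, of 1] by simp
  obtain d where d: "d > 0" "\<forall>w. w \<noteq> p \<and> dist w p < d \<longrightarrow> f w \<in> V \<and> lam w < 1"
    using eventually_conj[OF ev1 ev2] unfolding eventually_at by auto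
  show ?thesis
  proof (intro exI[of _ d] conjI allI impI)
    show "d > 0" by (rule d(1))
    fix w assume w: "dist w p < d \<and> a \<bullet> w \<le> b"
    show "w \<in> C"
    proof (cases "w = p")
      case True then show ?thesis using assms(5) by simp
    next
      case False
      then have fw: "f w \<in> V" "lam w < 1" using d(2) w by auto
      have l0: "lam w \<ge> 0" using w bq by (simp add: lam_def)
      have nz: "1 - lam w \<noteq> 0" using fw(2) by simp
      have "a \<bullet> f w = (a \<bullet> w - lam w * (a \<bullet> q)) / (1 - lam w)"
        by (simp add: f_def inner_diff_right divide_simps)
      also have "a \<bullet> w - lam w * (a \<bullet> q) = b * (1 - lam w)"
        using bq by (simp add: lam_def field_simps)
      finally have "a \<bullet> f w = b" using nz by simp
      then have fC: "f w \<in> C" using assms(8) fw(1) by blast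
      have "(1 - lam w) *\<^sub>R f w = w - lam w *\<^sub>R q" using nz by (simp add: f_def)
      then have "w = (1 - lam w) *\<^sub>R f w + lam w *\<^sub>R q" by simp
      moreover have "(1 - lam w) *\<^sub>R f w + lam w *\<^sub>R q \<in> C"
        using convexD[OF assms(1) fC assms(2)] fw(2) l0 by simp
      ultimately show ?thesis by simp
    qed
  qed
qed


lemma int_strict:
  fixes C :: "'a::euclidean_space set"
  assumes "q \<in> interior C" "\<forall>x\<in>C. a \<bullet> x \<le> b" "a \<noteq> 0"
  shows "a \<bullet> q < b"
proof -
  obtain r where r: "r > 0" "ball q r \<subseteq> C" using assms(1) by (metis mem_interior)
  define q' where "q' = q + (r / (2 * norm a)) *\<^sub>R a"
  have na: "norm a > 0" using assms(3) by simp
  have "dist q q' = r / 2" using na r(1) by (simp add: q'_def dist_norm)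
  then have "q' \<in> C" using r by auto
  then have "a \<bullet> q' \<le> b" using assms(2) by blast
  moreover have "a \<bullet> q' = a \<bullet> q + (r / (2 * norm a)) * (a \<bullet> a)" by (simp add: q'_def inner_add_right)
  moreover have "(r / (2 * norm a)) * (a \<bullet> a) = r * norm a / 2"
    using na by (simp add: dot_square_norm power2_eq_square)
  moreover have "r * norm a / 2 > 0" using r(1) na by simp
  ultimately show ?thesis by linarith
qed

lemma int_meets:
  assumes "adm g C2" "top_of_set (gspace g e) interior_of (gspace g e \<inter> C2) \<noteq> {}"
    "p \<in> top_of_set (gspace g e) interior_of T1" "p \<in> gspace g e \<inter> C2"
  shows "(top_of_set (gspace g e) interior_of T1) \<inter> (top_of_set (gspace g e) interior_of (gspace g e \<inter> C2)) \<noteq> {}"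
proof -
  have "p \<in> top_of_set (gspace g e) closure_of (top_of_set (gspace g e) interior_of (gspace g e \<inter> C2))"
    using tile_closure_interior[OF assms(1,2)] assms(4) by blast
  then show ?thesis unfolding in_closure_of using assms(3) openin_interior_of by blast
qed

lemma no_third:
  assumes "adm g C3" "top_of_set (gspace g e) interior_of (gspace g e \<inter> C3) \<noteq> {}"
    "closedin (top_of_set (gspace g e)) T1"
    "(top_of_set (gspace g e) interior_of (gspace g e \<inter> C3)) \<inter> (top_of_set (gspace g e) interior_of T1) = {}"
    "(top_of_set (gspace g e) interior_of (gspace g e \<inter> C3)) \<inter> (top_of_set (gspace g e) interior_of T2) = {}"
    "p \<in> gspace g e \<inter> C3" "\<delta> > 0" "gspace g e \<inter> ball p \<delta> \<subseteq> T1 \<union> T2"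
  shows False
proof -
  let ?X = "top_of_set (gspace g e)"
  let ?I3 = "?X interior_of (gspace g e \<inter> C3)"
  have pc: "p \<in> ?X closure_of ?I3" using tile_closure_interior[OF assms(1,2)] assms(6) by blast
  have oO: "openin ?X (gspace g e \<inter> ball p \<delta>)" by auto
  have pO: "p \<in> gspace g e \<inter> ball p \<delta>" using assms(6,7) by auto
  obtain u where u: "u \<in> ?I3" "u \<in> gspace g e \<inter> ball p \<delta>"
    using pc oO pO unfolding in_closure_of by blast
  define O' where "O' = ?I3 \<inter> (gspace g e \<inter> ball p \<delta>)"
  have oO': "openin ?X O'" unfolding O'_def using oO by auto
  have O'sub: "O' \<subseteq> T1 \<union> T2" using assms(8) by (auto simp: O'_def)
  show False
  proof (cases "O' \<subseteq> T1")
    case True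
    then have "O' \<subseteq> ?X interior_of T1" using oO' interior_of_maximal by blast
    then show False using u assms(4) by (auto simp: O'_def)
  next
    case False
    then obtain v where v: "v \<in> O'" "v \<notin> T1" by blast
    have "openin ?X (O' - T1)" using oO' assms(3) by (rule openin_diff)
    moreover have "O' - T1 \<subseteq> T2" using O'sub by blast
    ultimately have "O' - T1 \<subseteq> ?X interior_of T2" using interior_of_maximal by blast
    then show False using v assms(5) by (auto simp: O'_def)
  qed
qed


lemma adm_Int: "adm g C1 \<Longrightarrow> adm g C2 \<Longrightarrow> adm g (C1 \<inter> C2)"
  unfolding adm_def by (auto intro: convex_Int)

lemma ghull_hyperplane:
  fixes S :: "'a::euclidean_space set"
  assumes "S \<subseteq> gspace g e" "S \<noteq> {}" "gcodim g e S = 1" "a \<noteq> 0"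
    "g \<noteq> Euclidean \<longrightarrow> b = 0" "S \<subseteq> {x. a \<bullet> x = b}"
  shows "ghull g e S = gspace g e \<inter> {x. a \<bullet> x = b}"
proof (cases "g = Euclidean")
  case True
  have c: "DIM('a) - nat (aff_dim S) = 1" using assms(3) True by (simp add: gcodim_def gsdim_def ghull_def)
  have "aff_dim S \<ge> 0" using assms(2) aff_dim_negative_iff[of S] by linarith
  moreover have "aff_dim S \<le> DIM('a)" by (rule aff_dim_le_DIM)
  ultimately have ad: "aff_dim S = int DIM('a) - 1" using c by linarith
  have sub: "affine hull S \<subseteq> {x. a \<bullet> x = b}" using hull_minimal[of S "{x. a \<bullet> x = b}" affine] assms(6) affine_hyperplane[of a b] by blast
  have "affine hull S = {x. a \<bullet> x = b}"
    using affine_dim_equal[OF affine_affine_hull affine_hyperplane _ sub] assms(2,4) ad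
    by simp
  then show ?thesis using True by (simp add: ghull_def)
next
  case False
  then have b: "b = 0" using assms(5) by simp
  have dS: "dim (gspace g e \<inter> span S) = dim S" by (metis dim_span span_ghull[OF assms(1)])
  have c: "(DIM('a) - 1) - (dim S - 1) = 1"
    using assms(3) False gdim_nonE[OF False, where 'a='a] dS by (simp add: gcodim_def gsdim_def ghull_def)
  have "dim S \<ge> 1" using dim_ge1[OF False assms(1,2)] .
  moreover have "dim S \<le> DIM('a)" by (rule dim_subset_UNIV)
  ultimately have dd: "dim S = DIM('a) - 1" using c by linarith
  have sub: "span S \<subseteq> {x. a \<bullet> x = 0}" using assms(6) b by (intro span_minimal subspace_hyperplane) auto
  have "span S = {x. a \<bullet> x = 0}"
    using subspace_dim_equal[OF subspace_span subspace_hyperplane sub] dd dim_hyperplane[OF assms(4)] by simp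
  then show ?thesis using False b by (simp add: ghull_def)
qed

lemma two_tiles_cover:
  fixes C1 C2 :: "'a::euclidean_space set"
  assumes adm1: "adm g C1" and adm2: "adm g C2"
    and i1: "top_of_set (gspace g e) interior_of (gspace g e \<inter> C1) \<noteq> {}"
    and i2: "top_of_set (gspace g e) interior_of (gspace g e \<inter> C2) \<noteq> {}"
    and disj: "(top_of_set (gspace g e) interior_of (gspace g e \<inter> C1)) \<inter>
               (top_of_set (gspace g e) interior_of (gspace g e \<inter> C2)) = {}"
    and ne: "(gspace g e \<inter> C1) \<inter> (gspace g e \<inter> C2) \<noteq> {}"
    and cod: "gcodim g e ((gspace g e \<inter> C1) \<inter> (gspace g e \<inter> C2)) = 1"
    and p: "p \<in> grelint g e ((gspace g e \<inter> C1) \<inter> (gspace g e \<inter> C2))"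
  shows "\<exists>\<delta>>0. gspace g e \<inter> ball p \<delta> \<subseteq> (gspace g e \<inter> C1) \<union> (gspace g e \<inter> C2)"
proof -
  define S where "S = (gspace g e \<inter> C1) \<inter> (gspace g e \<inter> C2)"
  have SX: "S \<subseteq> gspace g e" and SC: "S \<subseteq> C1" "S \<subseteq> C2" by (auto simp: S_def)
  have cv1: "convex C1" and cv2: "convex C2" and cl1: "closed C1" and cl2: "closed C2"
    using adm1 adm2 by (auto simp: adm_def)
  obtain y1 where y1: "y1 \<in> top_of_set (gspace g e) interior_of (gspace g e \<inter> C1)" using i1 by blast
  obtain y2 where y2: "y2 \<in> top_of_set (gspace g e) interior_of (gspace g e \<inter> C2)" using i2 by blast
  have q1: "y1 \<in> interior C1" by (rule int_lift[OF adm1 y1])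
  have q2: "y2 \<in> interior C2" by (rule int_lift[OF adm2 y2])
  have ne1: "interior C1 \<noteq> {}" and ne2: "interior C2 \<noteq> {}" using q1 q2 by blast+
  obtain s where s: "s \<in> S" using ne by (auto simp: S_def)
  have sOm: "s \<in> Om g e" using s SX gspace_Om[of g e] by blast
  have ii: "interior C1 \<inter> interior C2 = {}"
  proof (rule ccontr)
    assume "interior C1 \<inter> interior C2 \<noteq> {}"
    then have n12: "interior (C1 \<inter> C2) \<noteq> {}" by simp
    have a12: "adm g (C1 \<inter> C2)" by (rule adm_Int[OF adm1 adm2])
    have "s \<in> closure (interior (C1 \<inter> C2))" using adm_closure_interior[OF a12 n12] s SC by auto
    then have "Om g e \<inter> closure (interior (C1 \<inter> C2)) \<noteq> {}" using sOm by blast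
    then have "Om g e \<inter> interior (C1 \<inter> C2) \<noteq> {}" by (metis open_Int_closure_eq_empty open_Om)
    then obtain w where w: "w \<in> Om g e" "w \<in> interior C1" "w \<in> interior C2" by auto
    have "NN g e w \<in> top_of_set (gspace g e) interior_of (gspace g e \<inter> C1)" by (rule int_drop[OF adm1 w(1,2)])
    moreover have "NN g e w \<in> top_of_set (gspace g e) interior_of (gspace g e \<inter> C2)" by (rule int_drop[OF adm2 w(1,3)])
    ultimately show False using disj by blast
  qed
  have iC: "interior C1 \<inter> C2 = {}"
  proof -
    have "C2 = closure (interior C2)" using adm_closure_interior[OF adm2 ne2] by simp
    then show ?thesis using ii by (metis open_Int_closure_eq_empty open_interior)
  qed
  have "C2 \<noteq> {}" using SC s by blast
  then obtain a b where ab: "a \<noteq> 0" "\<forall>x\<in>interior C1. a \<bullet> x \<le> b" "\<forall>x\<in>C2. a \<bullet> x \<ge> b"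
    using separating_hyperplane_sets[OF convex_interior[OF cv1] cv2 ne1 _ iC] by blast
  have h1: "\<forall>x\<in>C1. a \<bullet> x \<le> b"
  proof -
    have "closure (interior C1) \<subseteq> {x. a \<bullet> x \<le> b}"
      using ab(2) by (intro closure_minimal closed_halfspace_le) auto
    then show ?thesis using adm_closure_interior[OF adm1 ne1] by auto
  qed
  have h2: "\<forall>x\<in>C2. (-a) \<bullet> x \<le> -b" using ab(3) by simp
  have b0: "g \<noteq> Euclidean \<longrightarrow> b = 0"
  proof
    assume nE: "g \<noteq> Euclidean"
    have "0 \<in> C1" using adm_zero[OF adm1 nE] SC s by blast
    moreover have "0 \<in> C2" using adm_zero[OF adm2 nE] SC s by blast
    ultimately show "b = 0" using h1 ab(3) by force
  qed
  have SH: "S \<subseteq> {x. a \<bullet> x = b}" using SC h1 ab(3) by force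
  have gh: "ghull g e S = gspace g e \<inter> {x. a \<bullet> x = b}"
    using ghull_hyperplane[OF SX _ _ ab(1) b0 SH] ne cod by (simp add: S_def)
  obtain U where U: "openin (top_of_set (ghull g e S)) U" "p \<in> U" "U \<subseteq> S"
    using p by (auto simp: grelint_def interior_of_def S_def)
  obtain V where V: "open V" "U = ghull g e S \<inter> V" using U(1) by (auto simp: openin_open)
  have pS: "p \<in> S" using U by blast
  have pX: "p \<in> gspace g e" using pS SX by blast
  define V' where "V' = Om g e \<inter> NN g e -` V"
  have oV': "open V'" unfolding V'_def by (rule open_vimage_NN[OF V(1)])
  have pV': "p \<in> V'" using pX U(2) V(2) NN_id[OF pX] gspace_Om[of g e] by (auto simp: V'_def)
  have hV': "\<forall>w\<in>V'. a \<bullet> w = b \<longrightarrow> w \<in> C1 \<and> w \<in> C2"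
  proof (intro ballI impI)
    fix w assume w: "w \<in> V'" "a \<bullet> w = b"
    have wO: "w \<in> Om g e" using w(1) by (simp add: V'_def)
    have "a \<bullet> NN g e w = b" using NN_lin(3)[OF b0 wO] w(2) by simp
    moreover have "NN g e w \<in> gspace g e" by (rule NN_in[OF wO])
    moreover have "NN g e w \<in> V" using w(1) by (simp add: V'_def)
    ultimately have "NN g e w \<in> U" using V(2) gh by simp
    then have "NN g e w \<in> C1" "NN g e w \<in> C2" using U(3) SC by blast+
    then show "w \<in> C1 \<and> w \<in> C2" using NN_in_adm[OF adm1 wO] NN_in_adm[OF adm2 wO] by blast
  qed
  have apb: "a \<bullet> p = b" using pS SH by blast
  have s1: "a \<bullet> y1 < b" by (rule int_strict[OF q1 h1 ab(1)])
  have s2: "(-a) \<bullet> y2 < -b" by (rule int_strict[OF q2 h2]) (use ab(1) in simp)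
  obtain d1 where d1: "d1 > 0" "\<forall>w. dist w p < d1 \<and> a \<bullet> w \<le> b \<longrightarrow> w \<in> C1"
    using cone_trick[OF cv1 interior_subset[THEN subsetD, OF q1] s1 apb _ oV' pV'] pS SC hV' by blast
  obtain d2 where d2: "d2 > 0" "\<forall>w. dist w p < d2 \<and> (-a) \<bullet> w \<le> -b \<longrightarrow> w \<in> C2"
    using cone_trick[OF cv2 interior_subset[THEN subsetD, OF q2] s2, of p V'] apb pS SC hV' oV' pV' by auto
  show ?thesis
  proof (intro exI[of _ "min d1 d2"] conjI subsetI)
    show "min d1 d2 > 0" using d1 d2 by simp
    fix w assume w: "w \<in> gspace g e \<inter> ball p (min d1 d2)"
    then have dw: "dist w p < d1" "dist w p < d2" by (auto simp: dist_commute)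
    show "w \<in> (gspace g e \<inter> C1) \<union> (gspace g e \<inter> C2)"
    proof (cases "a \<bullet> w \<le> b")
      case True then show ?thesis using d1(2) dw w by blast
    next
      case False then have "(-a) \<bullet> w \<le> -b" by simp
      then show ?thesis using d2(2) dw w by blast
    qed
  qed
qed



definition Mset :: "geom \<Rightarrow> 'a::euclidean_space \<Rightarrow> 'a set \<Rightarrow> 'a set" where
  "Mset g y S = (if g = Euclidean then affine hull (insert y (affine hull S)) else span (insert y (span S)))"

lemma bad_small:
  fixes S :: "'a::euclidean_space set"
  assumes "S \<subseteq> gspace g e" "S \<noteq> {}" "gcodim g e S \<ge> 2"
  shows "closed (Mset g y S) \<and> interior (Mset g y S) = {}"
proof (cases "g = Euclidean")
  case True
  have c: "DIM('a) - nat (aff_dim S) \<ge> 2" using assms(3) True by (simp add: gcodim_def gsdim_def ghull_def)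
  have "aff_dim S \<ge> 0" using assms(2) aff_dim_negative_iff[of S] by linarith
  then have a2: "aff_dim S \<le> int DIM('a) - 2" using c by linarith
  have "aff_dim (affine hull (insert y (affine hull S))) \<le> aff_dim S + 1"
    using aff_dim_insert[of y "affine hull S"] by (simp split: if_splits)
  then have "aff_dim (Mset g y S) \<noteq> int DIM('a)" using True a2 by (simp add: Mset_def)
  then have "interior (Mset g y S) = {}" by (rule low_dim_interior)
  then show ?thesis using True by (simp add: Mset_def)
next
  case False
  have dS: "dim (gspace g e \<inter> span S) = dim S" by (metis dim_span span_ghull[OF assms(1)])
  have c: "(DIM('a) - 1) - (dim S - 1) \<ge> 2"
    using assms(3) False gdim_nonE[OF False, where 'a='a] dS by (simp add: gcodim_def gsdim_def ghull_def)
  have "dim S \<ge> 1" using dim_ge1[OF False assms(1,2)] .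
  then have d2: "dim S + 2 \<le> DIM('a)" using c by linarith
  have "dim (span (insert y (span S))) \<le> dim S + 1"
    using dim_insert[of y "span S"] by (simp split: if_splits)
  then have "dim (Mset g y S) < DIM('a)" using False d2 by (simp add: Mset_def)
  then have "interior (Mset g y S) = {}" by (rule empty_interior_lowdim)
  then show ?thesis using False by (simp add: Mset_def)
qed

lemma interior_Union_empty:
  fixes \<A> :: "'a::euclidean_space set set"
  assumes "finite \<A>" "\<forall>M\<in>\<A>. closed M \<and> interior M = {}"
  shows "interior (\<Union>\<A>) = {}"
  using assms
proof (induction \<A> rule: finite_induct)
  case empty then show ?case by simp
next
  case (insert M F)
  have cF: "closed (\<Union>F)" using insert by (intro closed_Union) auto
  have "interior (\<Union>F \<union> M) = interior (\<Union>F)"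
    by (rule interior_closed_Un_empty_interior[OF cF]) (use insert in auto)
  then show ?case using insert by (simp add: Un_commute)
qed



lemma frontier_sub:
  fixes e :: "'a::euclidean_space" and \<T> :: "'a set set"
  assumes eB: "e \<in> Basis"
    and tess: "is_tessellation g e \<T>"
    and lf: "glocally_finite g e \<T>"
    and TT0: "T \<in> \<T>"
    and CC: "\<forall>A\<in>\<T>. adm g (CC A) \<and> A = gspace g e \<inter> CC A"
    and xF: "x \<in> top_of_set (gspace g e) frontier_of T"
  shows "\<exists>S. is_side g e \<T> S \<and> S \<subseteq> T \<and> x \<in> S"
proof -
  let ?X = "gspace g e"
  let ?TX = "top_of_set (gspace g e)"
  have admA: "\<And>A. A \<in> \<T> \<Longrightarrow> adm g (CC A)" using CC by blast
  have eqA: "\<And>A. A \<in> \<T> \<Longrightarrow> ?X \<inter> CC A = A" using CC by blast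
  have thick: "\<And>A. A \<in> \<T> \<Longrightarrow> ?TX interior_of A \<noteq> {}"
    using tess by (auto simp: is_tessellation_def is_thick_def)
  have thickC: "\<And>A. A \<in> \<T> \<Longrightarrow> ?TX interior_of (?X \<inter> CC A) \<noteq> {}"
    using thick eqA by simp
  have disj: "\<And>A B. A \<in> \<T> \<Longrightarrow> B \<in> \<T> \<Longrightarrow> A \<noteq> B \<Longrightarrow> (?TX interior_of A) \<inter> (?TX interior_of B) = {}"
    using tess unfolding is_tessellation_def by blast
  have cover: "\<Union>\<T> = ?X" using tess by (simp add: is_tessellation_def)
  have AX: "\<And>A. A \<in> \<T> \<Longrightarrow> A \<subseteq> ?X" using cover by blast
  have clA: "\<And>A. A \<in> \<T> \<Longrightarrow> closedin ?TX A"
  proof -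
    fix A assume A: "A \<in> \<T>"
    have "closed (CC A)" using admA[OF A] by (simp add: adm_def)
    then have "closedin ?TX (?X \<inter> CC A)" by (rule closedin_closed_Int)
    then show "closedin ?TX A" using eqA[OF A] by simp
  qed
  have closA: "\<And>A. A \<in> \<T> \<Longrightarrow> closed (CC A)" using admA by (simp add: adm_def)
  have xT: "x \<in> T" and xnI: "x \<notin> ?TX interior_of T"
    using xF closure_of_closedin[OF clA[OF TT0]] by (auto simp: frontier_of_def)
  have xX: "x \<in> ?X" using xT AX[OF TT0] by blast
  have xOm: "x \<in> Om g e" using xX gspace_Om[of g e] by blast
  obtain \<rho>0 where \<rho>0: "\<rho>0 > 0" "cball x \<rho>0 \<subseteq> Om g e"
    using open_contains_cball[of "Om g e"] open_Om xOm by blast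
  define K0 where "K0 = NN g e ` cball x \<rho>0"
  have cK0: "compact K0" unfolding K0_def
    by (rule compact_continuous_image[OF continuous_on_subset[OF continuous_on_NN \<rho>0(2)] compact_cball])
  have K0X: "K0 \<subseteq> ?X" unfolding K0_def using \<rho>0(2) NN_in by blast
  define F0 where "F0 = {A \<in> \<T>. A \<inter> K0 \<noteq> {}}"
  have fF0: "finite F0" using lf cK0 K0X unfolding glocally_finite_def F0_def by blast
  define R where "R = \<Union>{A \<in> F0. x \<notin> A}"
  have fR: "finite {A \<in> F0. x \<notin> A}" by (rule finite_subset[OF _ fF0]) blast
  have clR: "closedin ?TX R" unfolding R_def
    by (rule closedin_Union[OF fR]) (use clA in \<open>auto simp: F0_def\<close>)
  have oXR: "openin ?TX (?X - R)"
    using openin_diff[OF openin_topspace clR] by simp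
  have xXR: "x \<in> ?X - R" using xX by (auto simp: R_def)
  obtain r where r: "r > 0" "ball x r \<inter> ?X \<subseteq> ?X - R"
    using oXR xXR unfolding openin_contains_ball by blast
  define r1 where "r1 = min \<rho>0 r"
  have r1: "r1 > 0" using r \<rho>0 by (simp add: r1_def)
  have loc: "\<And>A z. A \<in> \<T> \<Longrightarrow> z \<in> A \<Longrightarrow> dist x z < r1 \<Longrightarrow> x \<in> A"
  proof (rule ccontr)
    fix A z assume A: "A \<in> \<T>" "z \<in> A" "dist x z < r1" "x \<notin> A"
    have zX: "z \<in> ?X" using A AX by blast
    have "z \<in> cball x \<rho>0" using A(3) by (simp add: r1_def)
    then have "NN g e z \<in> K0" unfolding K0_def by blast
    then have "z \<in> K0" using NN_id[OF zX] by simp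
    then have "A \<in> F0" using A by (auto simp: F0_def)
    then have "z \<in> R" using A by (auto simp: R_def)
    moreover have "z \<in> ball x r \<inter> ?X" using A(3) zX by (simp add: r1_def)
    ultimately show False using r(2) by blast
  qed
  have xK0: "x \<in> K0" unfolding K0_def using \<rho>0(1) NN_id[OF xX]
    by (metis centre_in_cball image_eqI less_imp_le)
  have fTx: "finite {A \<in> \<T>. x \<in> A}"
    by (rule finite_subset[OF _ fF0]) (use xK0 in \<open>auto simp: F0_def\<close>)
  have "isCont (NN g e) x"
    using continuous_on_eq_continuous_at[OF open_Om, of g e "NN g e"] continuous_on_NN xOm by blast
  then obtain d where d: "d > 0" "\<forall>z. dist z x < d \<longrightarrow> dist (NN g e z) (NN g e x) < r1"
    using r1 unfolding continuous_at_eps_delta by blast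
  define \<rho> where "\<rho> = min d \<rho>0"
  have \<rho>: "\<rho> > 0" using d \<rho>0 by (simp add: \<rho>_def)
  have ballOm: "ball x \<rho> \<subseteq> Om g e" using \<rho>0(2) by (auto simp: \<rho>_def)
  have ballN: "\<And>z. z \<in> ball x \<rho> \<Longrightarrow> dist x (NN g e z) < r1"
    using d(2) NN_id[OF xX] by (auto simp: \<rho>_def dist_commute)
  have xcl: "x \<in> ?TX closure_of (?TX interior_of T)"
    using tile_closure_interior[OF admA[OF TT0] thickC[OF TT0]] xT eqA[OF TT0] by auto
  have "openin ?TX (?X \<inter> ball x \<rho>)" by auto
  moreover have "x \<in> ?X \<inter> ball x \<rho>" using xX \<rho> by auto
  ultimately obtain y where y: "y \<in> ?TX interior_of T" "y \<in> ?X \<inter> ball x \<rho>"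
    using xcl unfolding in_closure_of by blast
  have yT: "y \<in> T" using y(1) interior_of_subset[of ?TX T] by blast
  define B where "B = {A \<in> \<T>. x \<in> A \<and> A \<noteq> T \<and> gcodim g e (T \<inter> A) \<ge> 2}"
  have fB: "finite B" by (rule finite_subset[OF _ fTx]) (auto simp: B_def)
  define Ms where "Ms = (\<lambda>A. Mset g y (T \<inter> A)) ` B"
  have intMs: "interior (\<Union>Ms) = {}"
  proof (rule interior_Union_empty)
    show "finite Ms" using fB by (simp add: Ms_def)
    show "\<forall>M\<in>Ms. closed M \<and> interior M = {}"
    proof
      fix M assume "M \<in> Ms"
      then obtain A where A: "A \<in> B" "M = Mset g y (T \<inter> A)" by (auto simp: Ms_def)
      have "T \<inter> A \<subseteq> ?X" using AX[OF TT0] by blast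
      moreover have "T \<inter> A \<noteq> {}" using A xT by (auto simp: B_def)
      moreover have "gcodim g e (T \<inter> A) \<ge> 2" using A by (simp add: B_def)
      ultimately show "closed M \<and> interior M = {}" using bad_small A(2) by blast
    qed
  qed
  have "\<not> (?X \<inter> ball x \<rho> \<subseteq> T)"
  proof
    assume "?X \<inter> ball x \<rho> \<subseteq> T"
    then have "?X \<inter> ball x \<rho> \<subseteq> ?TX interior_of T" by (intro interior_of_maximal) auto
    then show False using xnI xX \<rho> by auto
  qed
  then obtain z0 where z0: "z0 \<in> ?X" "z0 \<in> ball x \<rho>" "z0 \<notin> T" by blast
  have z0C: "z0 \<notin> CC T" using z0 eqA[OF TT0] by blast
  define W where "W = Om g e \<inter> NN g e -` (ball x \<rho> - CC T)"
  have oW: "open W" unfolding W_def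
    by (rule open_vimage_NN) (use closA[OF TT0] in auto)
  have z0W: "z0 \<in> W" using z0 z0C NN_id[OF z0(1)] gspace_Om[of g e] by (auto simp: W_def)
  have "\<not> W \<subseteq> \<Union>Ms"
  proof
    assume "W \<subseteq> \<Union>Ms"
    then have "z0 \<in> interior (\<Union>Ms)" using oW z0W interiorI by blast
    then show False using intMs by simp
  qed
  then obtain w where w: "w \<in> W" "w \<notin> \<Union>Ms" by blast
  define z where "z = NN g e w"
  have wOm: "w \<in> Om g e" using w by (simp add: W_def)
  have zX: "z \<in> ?X" unfolding z_def using NN_in[OF wOm] .
  have zb: "z \<in> ball x \<rho>" and zC: "z \<notin> CC T" using w by (auto simp: W_def z_def)
  have zM: "\<And>A. A \<in> B \<Longrightarrow> z \<notin> Mset g y (T \<inter> A)"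
  proof -
    fix A assume A: "A \<in> B"
    then have "w \<notin> Mset g y (T \<inter> A)" using w(2) by (auto simp: Ms_def)
    then show "z \<notin> Mset g y (T \<inter> A)"
    proof (cases "g = Euclidean")
      case True then show ?thesis using \<open>w \<notin> Mset g y (T \<inter> A)\<close> by (simp add: z_def NN_Euclidean)
    next
      case False
      have "subspace (Mset g y (T \<inter> A))" using False by (simp add: Mset_def)
      then show ?thesis using NN_in_subspace[OF False _ wOm] \<open>w \<notin> Mset g y (T \<inter> A)\<close> by (simp add: z_def)
    qed
  qed
  define c where "c = (\<lambda>t::real. (1 - t) *\<^sub>R y + t *\<^sub>R z)"
  define \<gamma> where "\<gamma> = (\<lambda>t. NN g e (c t))"
  have cb: "\<And>t. t \<in> {0..1} \<Longrightarrow> c t \<in> ball x \<rho>"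
  proof -
    fix t :: real assume t: "t \<in> {0..1}"
    show "c t \<in> ball x \<rho>" unfolding c_def
      by (rule convexD[OF convex_ball]) (use y zb t in auto)
  qed
  have cOm: "\<And>t. t \<in> {0..1} \<Longrightarrow> c t \<in> Om g e" using cb ballOm by blast
  have cont: "continuous_on {0..1} \<gamma>"
  proof -
    have "continuous_on {0..1} c" unfolding c_def by (intro continuous_intros)
    moreover have "c ` {0..1} \<subseteq> Om g e" using cOm by blast
    ultimately show ?thesis unfolding \<gamma>_def by (rule continuous_on_compose2[OF continuous_on_NN])
  qed
  have \<gamma>X: "\<And>t. t \<in> {0..1} \<Longrightarrow> \<gamma> t \<in> ?X" unfolding \<gamma>_def using cOm NN_in by blast
  have \<gamma>r: "\<And>t. t \<in> {0..1} \<Longrightarrow> dist x (\<gamma> t) < r1" unfolding \<gamma>_def using cb ballN by blast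
  have yX: "y \<in> ?X" using y by blast
  have \<gamma>0: "\<gamma> 0 = y" unfolding \<gamma>_def c_def using NN_id[OF yX] by simp
  have \<gamma>1: "\<gamma> 1 = z" unfolding \<gamma>_def c_def using NN_id[OF zX] by simp
  define \<Gamma> where "\<Gamma> = {0..1} \<inter> \<gamma> -` CC T"
  have cl\<Gamma>: "closed \<Gamma>" unfolding \<Gamma>_def
    by (rule continuous_closed_preimage[OF cont closed_atLeastAtMost closA[OF TT0]])
  have yC: "y \<in> CC T" using yT eqA[OF TT0] by blast
  have zG: "0 \<in> \<Gamma>" using \<gamma>0 yC by (simp add: \<Gamma>_def)
  have bdd: "bdd_above \<Gamma>" by (rule bdd_aboveI[of _ 1]) (auto simp: \<Gamma>_def)
  define ts where "ts = Sup \<Gamma>"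
  have ts\<Gamma>: "ts \<in> \<Gamma>" unfolding ts_def using closed_contains_Sup[OF _ bdd cl\<Gamma>] zG by blast
  have ts01: "0 \<le> ts" "ts \<le> 1" using ts\<Gamma> by (auto simp: \<Gamma>_def)
  have ts1: "ts \<noteq> 1" using ts\<Gamma> \<gamma>1 zC by (auto simp: \<Gamma>_def)
  have tsl: "ts < 1" using ts01 ts1 by simp
  have after: "\<And>t. ts < t \<Longrightarrow> t \<le> 1 \<Longrightarrow> \<gamma> t \<notin> CC T"
  proof
    fix t assume t: "ts < t" "t \<le> 1" "\<gamma> t \<in> CC T"
    then have "t \<in> \<Gamma>" using ts01 by (auto simp: \<Gamma>_def)
    then have "t \<le> ts" unfolding ts_def using cSup_upper[OF _ bdd] by blast
    then show False using t by simp
  qed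
  define Q where "Q = \<Union>(CC ` {A \<in> \<T>. x \<in> A \<and> A \<noteq> T})"
  have clQ: "closed Q" unfolding Q_def
  proof (rule closed_Union)
    have "finite {A \<in> \<T>. x \<in> A \<and> A \<noteq> T}" by (rule finite_subset[OF _ fTx]) blast
    then show "finite (CC ` {A \<in> \<T>. x \<in> A \<and> A \<noteq> T})" by simp
    show "\<forall>S\<in>CC ` {A \<in> \<T>. x \<in> A \<and> A \<noteq> T}. closed S" using closA by blast
  qed
  have afterQ: "\<And>t. t \<in> {ts<..1} \<Longrightarrow> t \<in> {0..1} \<inter> \<gamma> -` Q"
  proof -
    fix t assume t: "t \<in> {ts<..1}"
    then have t01: "t \<in> {0..1}" using ts01 by auto
    have "\<gamma> t \<in> \<Union>\<T>" using \<gamma>X[OF t01] cover by simp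
    then obtain A where A: "A \<in> \<T>" "\<gamma> t \<in> A" by blast
    have xA: "x \<in> A" using loc[OF A \<gamma>r[OF t01]] .
    have "\<gamma> t \<notin> CC T" using after t by auto
    then have AT: "A \<noteq> T" using A(2) eqA[OF TT0] by blast
    have "\<gamma> t \<in> CC A" using A eqA[OF A(1)] by blast
    then show "t \<in> {0..1} \<inter> \<gamma> -` Q" using t01 A(1) xA AT by (auto simp: Q_def)
  qed
  have "closed ({0..1} \<inter> \<gamma> -` Q)"
    by (rule continuous_closed_preimage[OF cont closed_atLeastAtMost clQ])
  then have "closure {ts<..1} \<subseteq> {0..1} \<inter> \<gamma> -` Q"
    using afterQ by (intro closure_minimal) auto
  then have "{ts..1} \<subseteq> {0..1} \<inter> \<gamma> -` Q" using tsl by simp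
  moreover have "ts \<in> {ts..1}" using tsl by simp
  ultimately have "ts \<in> {0..1} \<inter> \<gamma> -` Q" by blast
  then obtain A where A: "A \<in> \<T>" "x \<in> A" "A \<noteq> T" "\<gamma> ts \<in> CC A" by (auto simp: Q_def)
  have ts01': "ts \<in> {0..1}" using ts01 by simp
  have \<gamma>A: "\<gamma> ts \<in> A" using A(4) \<gamma>X[OF ts01'] eqA[OF A(1)] by blast
  have \<gamma>T: "\<gamma> ts \<in> T" using ts\<Gamma> \<gamma>X[OF ts01'] eqA[OF TT0] by (auto simp: \<Gamma>_def)
  have dTA: "(?TX interior_of T) \<inter> (?TX interior_of A) = {}" using disj[OF TT0 A(1)] A(3) by blast
  have tsp: "ts > 0"
  proof (rule ccontr)
    assume "\<not> ts > 0"
    then have "ts = 0" using ts01 by simp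
    then have "y \<in> ?X \<inter> CC A" using \<gamma>A \<gamma>0 eqA[OF A(1)] by simp
    then have "(?TX interior_of T) \<inter> (?TX interior_of (?X \<inter> CC A)) \<noteq> {}"
      using int_meets[OF admA[OF A(1)] thickC[OF A(1)] y(1)] by blast
    then show False using dTA eqA[OF A(1)] by simp
  qed
  have notB: "\<not> gcodim g e (T \<inter> A) \<ge> 2"
  proof
    assume g2: "gcodim g e (T \<inter> A) \<ge> 2"
    then have AB: "A \<in> B" using A by (simp add: B_def)
    have wTA: "\<gamma> ts \<in> T \<inter> A" using \<gamma>A \<gamma>T by blast
    have cts: "c ts \<in> Om g e" using cOm[OF ts01'] .
    have zeq: "z = (1 / ts) *\<^sub>R c ts + (1 - 1 / ts) *\<^sub>R y"
      using tsp by (simp add: c_def algebra_simps)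
    have "z \<in> Mset g y (T \<inter> A)"
    proof (cases "g = Euclidean")
      case True
      have "c ts \<in> affine hull (T \<inter> A)" using wTA True by (simp add: \<gamma>_def NN_Euclidean hull_inc)
      then have h1: "c ts \<in> affine hull (insert y (affine hull (T \<inter> A)))" by (simp add: hull_inc)
      have h2: "y \<in> affine hull (insert y (affine hull (T \<inter> A)))" by (simp add: hull_inc)
      have "(1 / ts) *\<^sub>R c ts + (1 - 1 / ts) *\<^sub>R y \<in> affine hull (insert y (affine hull (T \<inter> A)))"
      proof -
        let ?M = "affine hull (insert y (affine hull (T \<inter> A)))"
        have aff: "\<forall>a\<in>?M. \<forall>b\<in>?M. \<forall>u v. u + v = 1 \<longrightarrow> u *\<^sub>R a + v *\<^sub>R b \<in> ?M"
          using affine_affine_hull[of "insert y (affine hull (T \<inter> A))"] unfolding affine_def .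
        show ?thesis using aff[rule_format, OF h1 h2, of "1 / ts" "1 - 1 / ts"] by simp
      qed
      then show ?thesis using True zeq by (simp add: Mset_def)
    next
      case False
      have "\<gamma> ts \<in> span (T \<inter> A)" using wTA span_superset by blast
      then have "c ts \<in> span (T \<inter> A)" using NN_in_subspace[OF False subspace_span cts] by (simp add: \<gamma>_def)
      then have h1: "c ts \<in> span (insert y (span (T \<inter> A)))"
        by (meson in_mono span_mono span_superset subset_insertI)
      have h2: "y \<in> span (insert y (span (T \<inter> A)))" by (simp add: span_base)
      have "(1 / ts) *\<^sub>R c ts + (1 - 1 / ts) *\<^sub>R y \<in> span (insert y (span (T \<inter> A)))"
        using h1 h2 by (intro span_add span_mul)
      then show ?thesis using False zeq by (simp add: Mset_def)
    qed
    then show False using zM[OF AB] by blast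
  qed
  have TAeq: "T \<inter> A = ?X \<inter> (CC T \<inter> CC A)" using eqA[OF TT0] eqA[OF A(1)] by blast
  have TAne: "T \<inter> A \<noteq> {}" using xT A(2) by blast
  have cod1: "gcodim g e (T \<inter> A) = 1"
  proof -
    have "gcodim g e (T \<inter> A) \<noteq> 0"
    proof
      assume "gcodim g e (T \<inter> A) = 0"
      then have "gsdim g (ghull g e (?X \<inter> (CC T \<inter> CC A))) \<ge> gdim g TYPE('a)"
        using TAeq by (simp add: gcodim_def)
      then have "?TX interior_of (?X \<inter> (CC T \<inter> CC A)) \<noteq> {}"
        using full_interior[OF adm_Int[OF admA[OF TT0] admA[OF A(1)]]] TAne TAeq by simp
      then have "?TX interior_of (T \<inter> A) \<noteq> {}" using TAeq by simp
      moreover have "?TX interior_of (T \<inter> A) \<subseteq> (?TX interior_of T) \<inter> (?TX interior_of A)"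
        by (simp add: interior_of_mono)
      ultimately show False using dTA by blast
    qed
    then show ?thesis using notB by simp
  qed
  have cell: "is_cell g e \<T> (T \<inter> A)"
    unfolding is_cell_def
  proof (intro conjI)
    show "T \<inter> A \<noteq> {}" by (rule TAne)
    show "\<exists>\<S>. \<S> \<subseteq> \<T> \<and> \<S> \<noteq> {} \<and> T \<inter> A = \<Inter> \<S>"
      using TT0 A(1) by (intro exI[of _ "{T, A}"]) auto
    show "\<forall>T'\<in>\<T>. T \<inter> A \<subseteq> T' \<or> grelint g e (T \<inter> A) \<inter> T' = {}"
    proof
      fix T'' assume T'': "T'' \<in> \<T>"
      show "T \<inter> A \<subseteq> T'' \<or> grelint g e (T \<inter> A) \<inter> T'' = {}"
      proof (cases "T'' = T \<or> T'' = A")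
        case True then show ?thesis by blast
      next
        case False
        have "grelint g e (T \<inter> A) \<inter> T'' = {}"
        proof (rule ccontr)
          assume "grelint g e (T \<inter> A) \<inter> T'' \<noteq> {}"
          then obtain p where p: "p \<in> grelint g e (T \<inter> A)" "p \<in> T''" by blast
          have TAeq2: "T \<inter> A = (?X \<inter> CC T) \<inter> (?X \<inter> CC A)" using eqA[OF TT0] eqA[OF A(1)] by simp
          have dC: "(?TX interior_of (?X \<inter> CC T)) \<inter> (?TX interior_of (?X \<inter> CC A)) = {}"
            using dTA eqA[OF TT0] eqA[OF A(1)] by simp
          have ne': "(?X \<inter> CC T) \<inter> (?X \<inter> CC A) \<noteq> {}" using TAne TAeq2 by simp
          have cod': "gcodim g e ((?X \<inter> CC T) \<inter> (?X \<inter> CC A)) = 1" using cod1 TAeq2 by simp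
          have p': "p \<in> grelint g e ((?X \<inter> CC T) \<inter> (?X \<inter> CC A))" using p(1) TAeq2 by simp
          obtain \<delta> where \<delta>: "\<delta> > 0" "?X \<inter> ball p \<delta> \<subseteq> (?X \<inter> CC T) \<union> (?X \<inter> CC A)"
            using two_tiles_cover[OF admA[OF TT0] admA[OF A(1)] thickC[OF TT0] thickC[OF A(1)] dC ne' cod' p'] by blast
          have cov: "?X \<inter> ball p \<delta> \<subseteq> T \<union> A" using \<delta>(2) eqA[OF TT0] eqA[OF A(1)] by simp
          have d1: "(?TX interior_of (?X \<inter> CC T'')) \<inter> (?TX interior_of T) = {}"
            using disj[OF T'' TT0] False eqA[OF T''] by simp
          have d2: "(?TX interior_of (?X \<inter> CC T'')) \<inter> (?TX interior_of A) = {}"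
            using disj[OF T'' A(1)] False eqA[OF T''] by simp
          have pC: "p \<in> ?X \<inter> CC T''" using p(2) eqA[OF T''] by simp
          show False
            by (rule no_third[OF admA[OF T''] thickC[OF T''] clA[OF TT0] d1 d2 pC \<delta>(1) cov])
        qed
        then show ?thesis by blast
      qed
    qed
  qed
  have "is_side g e \<T> (T \<inter> A)" using cell cod1 by (simp add: is_side_def)
  then show ?thesis using xT A(2) by blast
qed



theorem proposition4p6:
  fixes g :: geom and e :: "'a::euclidean_space" and \<T> :: "'a set set" and T :: "'a set"
  assumes "e \<in> Basis"
    and "is_tessellation g e \<T>"
    and "glocally_finite g e \<T>"
    and "T \<in> \<T>"
  shows "top_of_set (gspace g e) frontier_of T = \<Union> {S. is_side g e \<T> S \<and> S \<subseteq> T}"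
proof -
  let ?X = "gspace g e"
  let ?TX = "top_of_set (gspace g e)"
  have tilesP: "\<And>A. A \<in> \<T> \<Longrightarrow> is_polyhedron g e A" using assms(2) by (simp add: is_tessellation_def)
  have "\<forall>A\<in>\<T>. \<exists>C. adm g C \<and> A = ?X \<inter> C"
  proof
    fix A assume A: "A \<in> \<T>"
    show "\<exists>C. adm g C \<and> A = ?X \<inter> C" by (rule polyhedron_form[OF assms(1) tilesP[OF A]])
  qed
  from bchoice[OF this] obtain CC where CC: "\<forall>A\<in>\<T>. adm g (CC A) \<and> A = ?X \<inter> CC A" ..
  have admA: "\<And>A. A \<in> \<T> \<Longrightarrow> adm g (CC A)" using CC by blast
  have eqA: "\<And>A. A \<in> \<T> \<Longrightarrow> ?X \<inter> CC A = A" using CC by blast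
  have thick: "\<And>A. A \<in> \<T> \<Longrightarrow> ?TX interior_of A \<noteq> {}"
    using assms(2) by (auto simp: is_tessellation_def is_thick_def)
  have thickC: "\<And>A. A \<in> \<T> \<Longrightarrow> ?TX interior_of (?X \<inter> CC A) \<noteq> {}"
    using thick eqA by simp
  have disj: "\<And>A B. A \<in> \<T> \<Longrightarrow> B \<in> \<T> \<Longrightarrow> A \<noteq> B \<Longrightarrow> (?TX interior_of A) \<inter> (?TX interior_of B) = {}"
    using assms(2) unfolding is_tessellation_def by blast
  have cover: "\<Union>\<T> = ?X" using assms(2) by (simp add: is_tessellation_def)
  have TX: "T \<subseteq> ?X" using cover assms(4) by blast
  show ?thesis
  proof
    show "?TX frontier_of T \<subseteq> \<Union> {S. is_side g e \<T> S \<and> S \<subseteq> T}"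
    proof
      fix x assume x: "x \<in> ?TX frontier_of T"
      obtain S where "is_side g e \<T> S" "S \<subseteq> T" "x \<in> S"
        using frontier_sub[OF assms CC x] by blast
      then show "x \<in> \<Union> {S. is_side g e \<T> S \<and> S \<subseteq> T}" by blast
    qed
    show "\<Union> {S. is_side g e \<T> S \<and> S \<subseteq> T} \<subseteq> ?TX frontier_of T"
    proof
      fix x assume "x \<in> \<Union> {S. is_side g e \<T> S \<and> S \<subseteq> T}"
      then obtain S where S: "is_side g e \<T> S" "S \<subseteq> T" "x \<in> S" by blast
      have xT: "x \<in> T" using S by blast
      have xcl: "x \<in> ?TX closure_of T" using closure_of_subset[of T ?TX] TX xT by auto
      have xnI: "x \<notin> ?TX interior_of T"
      proof
        assume xI: "x \<in> ?TX interior_of T"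
        have "is_cell g e \<T> S" using S(1) by (simp add: is_side_def)
        then have "\<exists>\<S>. \<S> \<subseteq> \<T> \<and> \<S> \<noteq> {} \<and> S = \<Inter>\<S>" by (simp add: is_cell_def)
        then obtain \<S> where \<S>0: "\<S> \<subseteq> \<T> \<and> \<S> \<noteq> {} \<and> S = \<Inter>\<S>" ..
        then have \<S>: "\<S> \<subseteq> \<T>" "\<S> \<noteq> {}" "S = \<Inter>\<S>" by simp_all
        have cod: "gcodim g e S = 1" using S(1) by (simp add: is_side_def)
        show False
        proof (cases "\<exists>T'\<in>\<S>. T' \<noteq> T")
          case True
          then obtain T' where T': "T' \<in> \<S>" "T' \<noteq> T" by blast
          have T'T: "T' \<in> \<T>" using T' \<S>(1) by blast
          have "x \<in> T'" using S(3) \<S>(3) T'(1) by blast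
          then have "x \<in> ?X \<inter> CC T'" using eqA[OF T'T] by simp
          then have "(?TX interior_of T) \<inter> (?TX interior_of (?X \<inter> CC T')) \<noteq> {}"
            using int_meets[OF admA[OF T'T] thickC[OF T'T] xI] by blast
          then show False using disj[OF assms(4) T'T] T'(2) eqA[OF T'T] by simp
        next
          case False
          then have "\<S> \<subseteq> {T}" by auto
          then have "\<S> = {T}" using \<S>(2) by (metis subset_singletonD)
          then have ST: "S = T" using \<S>(3) by simp
          have "gsdim g (ghull g e T) \<ge> gdim g TYPE('a)" by (rule thick_full[OF TX thick[OF assms(4)]])
          then have "gcodim g e T = 0" by (simp add: gcodim_def)
          then show False using cod ST by simp
        qed
      qed
      show "x \<in> ?TX frontier_of T" using xcl xnI by (simp add: frontier_of_def)
    qed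
  qed
qed


end
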